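(* Let $L_1,L_2>0$, $\Omega=(0,L_1)\times(0,L_2)$, $\lambda\in\mathbb{R}\setminus\{0\}$, and $\mathcal{X}_1(\Omega)=\{\theta\in L^2(\Omega):\ \theta_y+\lambda\theta_x\in L^2(\Omega)\}$ with norm $(\|\theta\|_{L^2}^2+\|\theta_y+\lambda\theta_x\|_{L^2}^2)^{1/2}$. If $\theta\in\mathcal{X}_1(\Omega)$, then the traces of $\theta$ are defined on all of $\partial\Omega$: the traces at $x=0$ and $x=L_1$ belong to $H^{-1}(0,L_2)$ and the traces at $y=0$ and $y=L_2$ belong to $H^{-1}(0,L_1)$. Moreover the trace operators are linear and continuous, e.g. $\theta\mapsto\theta|_{x=0}$ is continuous from $\mathcal{X}_1(\Omega)$ into $H^{-1}(0,L_2)$.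
   Context: Derivatives are taken in the sense of distributions on $\Omega$. *)

theory Defs
  imports "HOL-Analysis.Analysis"
begin

fun Ck :: "nat \<Rightarrow> ('a::real_normed_vector \<Rightarrow> real) \<Rightarrow> bool" where
  "Ck 0 f = continuous_on UNIV f"
| "Ck (Suc k) f = (continuous_on UNIV f \<and> (\<forall>z. f differentiable (at z)) \<and>
      (\<forall>v. Ck k (\<lambda>z. frechet_derivative f (at z) v)))"

definition smooth_fun :: "('a::real_normed_vector \<Rightarrow> real) \<Rightarrow> bool" where
  "smooth_fun f \<longleftrightarrow> (\<forall>k. Ck k f)"

definition test_fun :: "'a::real_normed_vector set \<Rightarrow> ('a \<Rightarrow> real) \<Rightarrow> bool" where
  "test_fun S \<phi> \<longleftrightarrow> smooth_fun \<phi> \<and> compact (closure {z. \<phi> z \<noteq> 0})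
      \<and> closure {z. \<phi> z \<noteq> 0} \<subseteq> S"

definition pdx :: "(real \<times> real \<Rightarrow> real) \<Rightarrow> real \<times> real \<Rightarrow> real" where
  "pdx \<phi> z = frechet_derivative \<phi> (at z) (1, 0)"
definition pdy :: "(real \<times> real \<Rightarrow> real) \<Rightarrow> real \<times> real \<Rightarrow> real" where
  "pdy \<phi> z = frechet_derivative \<phi> (at z) (0, 1)"

definition L2_on :: "'a::euclidean_space set \<Rightarrow> ('a \<Rightarrow> real) set" where
  "L2_on S = {f. f \<in> borel_measurable (lebesgue_on S) \<and>
                 integrable (lebesgue_on S) (\<lambda>z. (f z)\<^sup>2)}"

definition L2norm :: "'a::euclidean_space set \<Rightarrow> ('a \<Rightarrow> real) \<Rightarrow> real" where
  "L2norm S f = sqrt (LINT z|lebesgue_on S. (f z)\<^sup>2)"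

definition transport_deriv ::
  "real \<Rightarrow> (real \<times> real) set \<Rightarrow> (real \<times> real \<Rightarrow> real) \<Rightarrow> (real \<times> real \<Rightarrow> real) \<Rightarrow> bool" where
  "transport_deriv lam \<Omega> \<theta> g \<longleftrightarrow>
     (\<forall>\<phi>. test_fun \<Omega> \<phi> \<longrightarrow>
        (LINT z|lebesgue_on \<Omega>. g z * \<phi> z) =
        - (LINT z|lebesgue_on \<Omega>. \<theta> z * (pdy \<phi> z + lam * pdx \<phi> z)))"

definition X1 :: "real \<Rightarrow> (real \<times> real) set \<Rightarrow> (real \<times> real \<Rightarrow> real) set" where
  "X1 lam \<Omega> = {\<theta>. \<theta> \<in> L2_on \<Omega> \<and> (\<exists>g \<in> L2_on \<Omega>. transport_deriv lam \<Omega> \<theta> g)}"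

definition X1norm :: "real \<Rightarrow> (real \<times> real) set \<Rightarrow> (real \<times> real \<Rightarrow> real) \<Rightarrow> real" where
  "X1norm lam \<Omega> \<theta> =
     sqrt ((L2norm \<Omega> \<theta>)\<^sup>2 +
           (L2norm \<Omega> (SOME g. g \<in> L2_on \<Omega> \<and> transport_deriv lam \<Omega> \<theta> g))\<^sup>2)"

definition H1norm :: "real \<Rightarrow> real \<Rightarrow> (real \<Rightarrow> real) \<Rightarrow> real" where
  "H1norm a b \<phi> = sqrt ((LINT t|lebesgue_on {a<..<b}. (\<phi> t)\<^sup>2) +
                         (LINT t|lebesgue_on {a<..<b}. (deriv \<phi> t)\<^sup>2))"

text \<open>An element of H^{-1}(a,b) = (H^1_0(a,b))', represented by its action on the dense
  subspace C_c^infinity(a,b): a linear functional bounded w.r.t. the H^1 norm.\<close>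
definition in_Hm1 :: "real \<Rightarrow> real \<Rightarrow> ((real \<Rightarrow> real) \<Rightarrow> real) \<Rightarrow> bool" where
  "in_Hm1 a b F \<longleftrightarrow>
     (\<forall>\<phi> \<psi> \<alpha> \<beta>. test_fun {a<..<b} \<phi> \<longrightarrow> test_fun {a<..<b} \<psi> \<longrightarrow>
        F (\<lambda>t. \<alpha> * \<phi> t + \<beta> * \<psi> t) = \<alpha> * F \<phi> + \<beta> * F \<psi>) \<and>
     (\<exists>C. \<forall>\<phi>. test_fun {a<..<b} \<phi> \<longrightarrow> \<bar>F \<phi>\<bar> \<le> C * H1norm a b \<phi>)"

text \<open>T is a trace operator from X_1(Omega) into H^{-1}(a,b): linear, continuous, and
  coinciding with the pointwise boundary restriction r for C^1 functions.\<close>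
definition is_trace_op ::
  "real \<Rightarrow> (real \<times> real) set \<Rightarrow> real \<Rightarrow> real \<Rightarrow>
   ((real \<times> real \<Rightarrow> real) \<Rightarrow> real \<Rightarrow> real) \<Rightarrow>
   ((real \<times> real \<Rightarrow> real) \<Rightarrow> (real \<Rightarrow> real) \<Rightarrow> real) \<Rightarrow> bool" where
  "is_trace_op lam \<Omega> a b r T \<longleftrightarrow>
     (\<forall>\<theta> \<in> X1 lam \<Omega>. in_Hm1 a b (T \<theta>)) \<and>
     (\<forall>\<theta> \<in> X1 lam \<Omega>. \<forall>\<eta> \<in> X1 lam \<Omega>. \<forall>\<alpha> \<beta> \<phi>. test_fun {a<..<b} \<phi> \<longrightarrow>
        T (\<lambda>z. \<alpha> * \<theta> z + \<beta> * \<eta> z) \<phi> = \<alpha> * T \<theta> \<phi> + \<beta> * T \<eta> \<phi>) \<and>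
     (\<exists>C. \<forall>\<theta> \<in> X1 lam \<Omega>. \<forall>\<phi>. test_fun {a<..<b} \<phi> \<longrightarrow>
        \<bar>T \<theta> \<phi>\<bar> \<le> C * X1norm lam \<Omega> \<theta> * H1norm a b \<phi>) \<and>
     (\<forall>\<theta>. Ck 1 \<theta> \<longrightarrow> (\<forall>\<phi>. test_fun {a<..<b} \<phi> \<longrightarrow>
        T \<theta> \<phi> = (LINT t|lebesgue_on {a<..<b}. r \<theta> t * \<phi> t)))"

end

theory Submission
  imports Defs "HOL-Computational_Algebra.Polynomial"
begin


lemma Ck_cont: "Ck k f \<Longrightarrow> continuous_on UNIV f"
  by (cases k) auto

lemma Ck_Suc_imp: "Ck (Suc k) f \<Longrightarrow> Ck k f"
proof (induction k arbitrary: f)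
  case 0 then show ?case by simp
next
  case (Suc k) then show ?case by (metis Ck.simps(2))
qed

lemma Ck_le: "Ck k f \<Longrightarrow> j \<le> k \<Longrightarrow> Ck j f"
proof (induction k)
  case 0 then show ?case by simp
next
  case (Suc k) then show ?case using Ck_Suc_imp le_Suc_eq by blast
qed

lemma Ck_const: "Ck k (\<lambda>z. c)"
  by (induction k arbitrary: c) auto

lemma fd_eq: "(f has_derivative f') (at z) \<Longrightarrow> frechet_derivative f (at z) v = f' v"
  using frechet_derivative_at by metis

lemma Ck_add: "Ck k f \<Longrightarrow> Ck k g \<Longrightarrow> Ck k (\<lambda>z. f z + g z)"
proof (induction k arbitrary: f g)
  case 0 then show ?case by (auto intro: continuous_intros)
next
  case (Suc k)
  have df: "\<And>z. (f has_derivative frechet_derivative f (at z)) (at z)"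
    by (metis Ck.simps(2) Suc.prems(1) frechet_derivative_works)
  have dg: "\<And>z. (g has_derivative frechet_derivative g (at z)) (at z)"
    by (metis Ck.simps(2) Suc.prems(2) frechet_derivative_works)
  have e: "\<And>z v. frechet_derivative (\<lambda>z. f z + g z) (at z) v
       = frechet_derivative f (at z) v + frechet_derivative g (at z) v"
    using fd_eq[OF has_derivative_add[OF df dg]] by simp
  show ?case using Suc df dg
    by (auto simp: e intro!: continuous_intros differentiableI[OF has_derivative_add[OF df dg]])
qed

lemma Ck_cmult: "Ck k f \<Longrightarrow> Ck k (\<lambda>z. c * f z)"
proof (induction k arbitrary: f)
  case 0 then show ?case by (auto intro: continuous_intros)
next
  case (Suc k)
  have df: "\<And>z. (f has_derivative frechet_derivative f (at z)) (at z)"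
    by (metis Ck.simps(2) Suc.prems(1) frechet_derivative_works)
  have e: "\<And>z v. frechet_derivative (\<lambda>z. c * f z) (at z) v
       = c * frechet_derivative f (at z) v"
    using fd_eq[OF has_derivative_mult_right[OF df]] by simp
  show ?case using Suc df
    by (auto simp: e intro!: continuous_intros differentiableI[OF has_derivative_mult_right[OF df]])
qed

lemma Ck_mult: "Ck k f \<Longrightarrow> Ck k g \<Longrightarrow> Ck k (\<lambda>z. f z * g z)"
proof (induction k arbitrary: f g)
  case 0 then show ?case by (auto intro: continuous_intros)
next
  case (Suc k)
  have df: "\<And>z. (f has_derivative frechet_derivative f (at z)) (at z)"
    by (metis Ck.simps(2) Suc.prems(1) frechet_derivative_works)
  have dg: "\<And>z. (g has_derivative frechet_derivative g (at z)) (at z)"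
    by (metis Ck.simps(2) Suc.prems(2) frechet_derivative_works)
  have D: "\<And>z. ((\<lambda>z. f z * g z) has_derivative
      (\<lambda>v. f z * frechet_derivative g (at z) v + frechet_derivative f (at z) v * g z)) (at z)"
    using has_derivative_mult[OF df dg] by simp
  have e: "\<And>z v. frechet_derivative (\<lambda>z. f z * g z) (at z) v
       = f z * frechet_derivative g (at z) v + frechet_derivative f (at z) v * g z"
    using fd_eq[OF D] by simp
  have "Ck k (\<lambda>z. f z * frechet_derivative g (at z) v + frechet_derivative f (at z) v * g z)" for v
    using Suc Ck_Suc_imp by (intro Ck_add Suc.IH) auto
  then show ?case using Suc.prems
    by (auto simp: e intro!: continuous_intros differentiableI[OF D])
qed

lemma Ck_inverse: "Ck k g \<Longrightarrow> (\<And>z. g z \<noteq> 0) \<Longrightarrow> Ck k (\<lambda>z. 1 / g z)"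
proof (induction k arbitrary: g)
  case 0 then show ?case by (auto intro!: continuous_on_divide continuous_on_const)
next
  case (Suc k)
  have dg: "\<And>z. (g has_derivative frechet_derivative g (at z)) (at z)"
    by (metis Ck.simps(2) Suc.prems(1) frechet_derivative_works)
  have D: "((\<lambda>z. 1 / g z) has_derivative
      (\<lambda>v. (-1) * frechet_derivative g (at z) v * ((1 / g z) * (1 / g z)))) (at z)" for z
  proof -
    have "((\<lambda>x. inverse (g x)) has_derivative (\<lambda>h. - (inverse (g z) * frechet_derivative g (at z) h * inverse (g z)))) (at z)"
      by (rule Deriv.has_derivative_inverse[OF Suc.prems(2)[of z] dg[of z]])
    moreover have "(\<lambda>h. - (inverse (g z) * frechet_derivative g (at z) h * inverse (g z)))
        = (\<lambda>v. (-1) * frechet_derivative g (at z) v * ((1 / g z) * (1 / g z)))"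
      by (simp add: fun_eq_iff divide_inverse)
    moreover have "(\<lambda>x. inverse (g x)) = (\<lambda>z. 1 / g z)" by (simp add: fun_eq_iff divide_inverse)
    ultimately show ?thesis by simp
  qed
  have e: "frechet_derivative (\<lambda>z. 1 / g z) (at z) v
       = (-1) * frechet_derivative g (at z) v * ((1 / g z) * (1 / g z))" for z v
    using fd_eq[OF D] by simp
  have ck: "Ck k (\<lambda>z. 1 / g z)" using Suc.IH Suc.prems Ck_Suc_imp by blast
  have "Ck k (\<lambda>z. (-1) * frechet_derivative g (at z) v * ((1 / g z) * (1 / g z)))" for v
  proof -
    have "Ck k (\<lambda>z. frechet_derivative g (at z) v)" using Suc.prems(1) by simp
    then have "Ck k (\<lambda>z. (-1) * frechet_derivative g (at z) v)" by (rule Ck_cmult)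
    then show ?thesis using Ck_mult[OF _ Ck_mult[OF ck ck]] by blast
  qed
  then have "\<forall>v. Ck k (\<lambda>z. frechet_derivative (\<lambda>z. 1 / g z) (at z) v)" by (simp add: e)
  moreover have "\<forall>z. (\<lambda>z. 1 / g z) differentiable at z" using D by (blast intro: differentiableI)
  moreover have "continuous_on UNIV (\<lambda>z. 1 / g z)" using Ck_cont[OF ck] .
  ultimately show ?case by simp
qed

lemma Ck_linear: "bounded_linear L \<Longrightarrow> Ck k (L :: 'a::real_normed_vector \<Rightarrow> real)"
proof (induction k)
  case 0 then show ?case by (simp add: linear_continuous_on)
next
  case (Suc k)
  have D: "\<And>z. (L has_derivative L) (at z)" using Suc.prems bounded_linear_imp_has_derivative by blast
  show ?case using Suc D by (auto simp: fd_eq[OF D] linear_continuous_on Ck_const intro: differentiableI)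
qed

lemma Ck_compose: "Ck k (f::real\<Rightarrow>real) \<Longrightarrow> Ck k g \<Longrightarrow> Ck k (\<lambda>z. f (g z))"
proof (induction k arbitrary: f g)
  case 0 then show ?case
    using continuous_on_compose2[of UNIV f UNIV g] by auto
next
  case (Suc k)
  have df: "\<And>z. (f has_derivative frechet_derivative f (at z)) (at z)"
    by (metis Ck.simps(2) Suc.prems(1) frechet_derivative_works)
  have dg: "\<And>z. (g has_derivative frechet_derivative g (at z)) (at z)"
    by (metis Ck.simps(2) Suc.prems(2) frechet_derivative_works)
  have lin: "frechet_derivative f (at w) x = x * frechet_derivative f (at w) 1" for w x
  proof -
    have "linear (frechet_derivative f (at w))" using linear_frechet_derivative differentiableI[OF df] by blast
    from linear_cmul[OF this, of x 1] show ?thesis by simp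
  qed
  have D: "((\<lambda>z. f (g z)) has_derivative
      (\<lambda>v. frechet_derivative g (at z) v * frechet_derivative f (at (g z)) 1)) (at z)" for z
  proof -
    have "((\<lambda>z. f (g z)) has_derivative (\<lambda>v. frechet_derivative f (at (g z)) (frechet_derivative g (at z) v))) (at z)"
      using diff_chain_at[OF dg df] by (simp add: o_def)
    moreover have "(\<lambda>v. frechet_derivative f (at (g z)) (frechet_derivative g (at z) v))
       = (\<lambda>v. frechet_derivative g (at z) v * frechet_derivative f (at (g z)) 1)"
      by (rule ext) (rule lin)
    ultimately show ?thesis by simp
  qed
  have e: "frechet_derivative (\<lambda>z. f (g z)) (at z) v
       = frechet_derivative g (at z) v * frechet_derivative f (at (g z)) 1" for z v
    using fd_eq[OF D] by simp
  have c1: "Ck k (\<lambda>z. frechet_derivative g (at z) v)" for v using Suc.prems(2) by simp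
  have c2: "Ck k (\<lambda>w. frechet_derivative f (at w) 1)" using Suc.prems(1) by simp
  have c3: "Ck k g" using Suc.prems(2) Ck_Suc_imp by blast
  have "Ck k (\<lambda>z. frechet_derivative g (at z) v * frechet_derivative f (at (g z)) 1)" for v
    using Ck_mult[OF c1 Suc.IH[OF c2 c3]] by blast
  then have "\<forall>v. Ck k (\<lambda>z. frechet_derivative (\<lambda>z. f (g z)) (at z) v)" by (simp add: e)
  moreover have "continuous_on UNIV (\<lambda>z. f (g z))"
    using Suc.prems Ck_cont[of "Suc k" f] Ck_cont[of "Suc k" g] continuous_on_compose2[of UNIV f UNIV g] by simp
  moreover have "\<forall>z. (\<lambda>z. f (g z)) differentiable at z" using D by (blast intro: differentiableI)
  ultimately show ?case by simp
qed

lemma Ck_real_deriv: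
  assumes "\<And>x. ((f::real\<Rightarrow>real) has_real_derivative f' x) (at x)" "Ck k f'"
  shows "Ck (Suc k) f"
proof -
  have D: "\<And>z. (f has_derivative (\<lambda>v. f' z * v)) (at z)"
    using assms(1) by (simp add: has_field_derivative_def)
  have "continuous_on UNIV f"
    using assms(1) by (meson DERIV_isCont continuous_at_imp_continuous_on)
  moreover have "Ck k (\<lambda>z. frechet_derivative f (at z) v)" for v
  proof -
    have "(\<lambda>z. frechet_derivative f (at z) v) = (\<lambda>z. v * f' z)"
      by (simp add: fd_eq[OF D] mult.commute)
    then show ?thesis using Ck_cmult[OF assms(2), of v] by simp
  qed
  ultimately show ?thesis by (auto intro!: differentiableI[OF D])
qed

lemma Ck_deriv:
  assumes "Ck (Suc k) (f::real\<Rightarrow>real)"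
  shows "Ck k (deriv f)" "\<And>x. (f has_real_derivative deriv f x) (at x)"
proof -
  show "\<And>x. (f has_real_derivative deriv f x) (at x)"
    using assms DERIV_deriv_iff_real_differentiable by (metis Ck.simps(2))
  then have "\<And>x. deriv f x = frechet_derivative f (at x) 1"
    by (metis fd_eq has_field_derivative_def mult.comm_neutral)
  then have "deriv f = (\<lambda>x. frechet_derivative f (at x) 1)" by auto
  then show "Ck k (deriv f)" using assms by (metis Ck.simps(2))
qed


definition hp :: "real poly \<Rightarrow> real \<Rightarrow> real" where
  "hp p t = (if t > 0 then poly p (1/t) * exp (- (1/t)) else 0)"

lemma poly_exp_lim: "((\<lambda>s. poly (p::real poly) s * exp (- s)) \<longlongrightarrow> 0) at_top"
proof -
  have eq: "(\<lambda>s. poly p s * exp (- s)) = (\<lambda>s. \<Sum>i\<le>degree p. coeff p i * (s ^ i / exp s))"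
    by (simp add: fun_eq_iff poly_altdef sum_distrib_right exp_minus divide_inverse mult.assoc)
  have "((\<lambda>s. \<Sum>i\<le>degree p. coeff p i * (s ^ i / exp s)) \<longlongrightarrow> (\<Sum>i\<le>degree p. coeff p i * 0)) at_top"
  proof (rule tendsto_sum)
    fix i show "((\<lambda>s. coeff p i * (s ^ i / exp s)) \<longlongrightarrow> coeff p i * 0) at_top"
      by (rule tendsto_mult[OF tendsto_const tendsto_power_div_exp_0])
  qed
  then show ?thesis by (simp add: eq)
qed

lemma hp_right_lim: "(hp p \<longlongrightarrow> 0) (at_right 0)"
proof -
  have lim: "((\<lambda>t. poly p (inverse t) * exp (- inverse t)) \<longlongrightarrow> 0) (at_right 0)"
    using filterlim_compose[OF poly_exp_lim filterlim_inverse_at_top_right] .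
  have ev: "eventually (\<lambda>t. poly p (inverse t) * exp (- inverse t) = hp p t) (at_right 0)"
    by (rule eventually_mono[OF eventually_at_right_less]) (simp add: hp_def divide_inverse)
  show ?thesis using tendsto_cong[OF ev] lim by blast
qed

lemma hp_deriv: "(hp p has_real_derivative hp ([:0,0,1:] * (p - pderiv p)) t) (at t)"
proof (cases "t > 0")
  case True
  have d: "((\<lambda>t. poly p (1/t) * exp (- (1/t))) has_real_derivative
      poly ([:0,0,1:] * (p - pderiv p)) (1/t) * exp (- (1/t))) (at t)"
  proof -
    have "((\<lambda>t. poly p (1/t) * exp (- (1/t))) has_real_derivative
      (poly (pderiv p) (1/t) * (- inverse (t*t)) * exp (- (1/t)) + poly p (1/t) * (exp (- (1/t)) * (inverse (t*t))))) (at t)"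
      using True
      by (auto intro!: derivative_eq_intros DERIV_chain2[OF poly_DERIV] simp: divide_inverse)
    moreover have "(poly (pderiv p) (1/t) * (- inverse (t*t)) * exp (- (1/t)) + poly p (1/t) * (exp (- (1/t)) * (inverse (t*t))))
       = poly ([:0,0,1:] * (p - pderiv p)) (1/t) * exp (- (1/t))"
      by (simp add: algebra_simps divide_inverse power2_eq_square)
    ultimately show ?thesis by simp
  qed
  have "(hp p has_real_derivative poly ([:0,0,1:] * (p - pderiv p)) (1/t) * exp (- (1/t))) (at t)"
    by (rule has_field_derivative_transform_within_open[OF d, where S="{0<..}"]) (use True in \<open>auto simp: hp_def\<close>)
  then show ?thesis using True by (simp add: hp_def)
next
  case False
  show ?thesis
  proof (cases "t < 0")
    case True
    have "((\<lambda>_. 0) has_real_derivative 0) (at t)" by simp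
    then have "(hp p has_real_derivative 0) (at t)"
      by (rule has_field_derivative_transform_within_open[OF _, where S="{..<0}"]) (use True in \<open>auto simp: hp_def\<close>)
    then show ?thesis using True by (simp add: hp_def)
  next
    case False
    with \<open>\<not> t > 0\<close> have t0: "t = 0" by simp
    have "((\<lambda>y. (hp p y - hp p 0) / (y - 0)) \<longlongrightarrow> 0) (at 0)"
    proof (rule filterlim_split_at)
      show "((\<lambda>y. (hp p y - hp p 0) / (y - 0)) \<longlongrightarrow> 0) (at_left 0)"
      proof (rule tendsto_eventually)
        show "\<forall>\<^sub>F y in at_left 0. (hp p y - hp p 0) / (y - 0) = 0"
        proof -
          have e: "eventually (\<lambda>x. x \<in> {-1<..<0}) (at_left (0::real))"
            by (rule eventually_at_left_real) simp
          show ?thesis by (rule eventually_mono[OF e]) (simp add: hp_def)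
        qed
      qed
    next
      have "eventually (\<lambda>y. hp ([:0,1:] * p) y = (hp p y - hp p 0) / (y - 0)) (at_right 0)"
        by (auto simp: hp_def intro!: eventually_mono[OF eventually_at_right_less[of 0]])
      from tendsto_cong[OF this] hp_right_lim[of "[:0,1:] * p"]
      show "((\<lambda>y. (hp p y - hp p 0) / (y - 0)) \<longlongrightarrow> 0) (at_right 0)" by simp
    qed
    then show ?thesis using t0 by (simp add: has_field_derivative_iff hp_def)
  qed
qed

lemma hp_Ck: "Ck k (hp p)"
proof (induction k arbitrary: p)
  case 0
  show ?case using hp_deriv by (meson Ck.simps(1) DERIV_isCont continuous_at_imp_continuous_on)
next
  case (Suc k)
  show ?case by (rule Ck_real_deriv[OF hp_deriv Suc.IH])
qed

definition hh :: "real \<Rightarrow> real" where "hh t = (if t > 0 then exp (- (1/t)) else 0)"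

lemma hh_hp: "hh = hp 1" by (simp add: fun_eq_iff hh_def hp_def)
lemma hh_Ck: "Ck k hh" by (simp add: hh_hp hp_Ck)
lemma hh_nonneg: "hh t \<ge> 0" by (simp add: hh_def)
lemma hh_pos: "t > 0 \<Longrightarrow> hh t > 0" by (simp add: hh_def)
lemma hh_zero: "t \<le> 0 \<Longrightarrow> hh t = 0" by (simp add: hh_def)
lemma hh_mono: "s \<le> t \<Longrightarrow> hh s \<le> hh t"
  by (auto simp: hh_def divide_simps)

definition SS :: "real \<Rightarrow> real" where "SS t = hh t / (hh t + hh (1 - t))"

lemma SS_den: "hh t + hh (1 - t) > 0"
  using hh_pos[of t] hh_pos[of "1-t"] hh_nonneg[of t] hh_nonneg[of "1-t"] by (cases "t>0") auto

lemma Ck_id: "Ck k (\<lambda>t::real. t)" by (rule Ck_linear) (rule bounded_linear_ident)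

lemma SS_Ck: "Ck k SS"
proof -
  have a: "Ck k (\<lambda>t. hh (1 - t))"
    by (rule Ck_compose[OF hh_Ck]) (use Ck_add[OF Ck_const Ck_cmult[OF Ck_id, of k "-1"], of 1] in simp)
  have "Ck k (\<lambda>t. 1 / (hh t + hh (1 - t)))"
    by (rule Ck_inverse[OF Ck_add[OF hh_Ck a]]) (metis SS_den order_less_irrefl)
  from Ck_mult[OF hh_Ck this] show ?thesis unfolding SS_def by (simp add: divide_inverse)
qed

lemma SS_0: "t \<le> 0 \<Longrightarrow> SS t = 0" by (simp add: SS_def hh_zero)
lemma SS_1: "t \<ge> 1 \<Longrightarrow> SS t = 1"
  using hh_pos[of t] by (simp add: SS_def hh_zero)
lemma SS_nonneg: "SS t \<ge> 0" using SS_den[of t] hh_nonneg[of t] by (simp add: SS_def)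
lemma SS_le1: "SS t \<le> 1" using SS_den[of t] hh_nonneg[of "1-t"] by (simp add: SS_def divide_simps)
lemma SS_mono: "s \<le> t \<Longrightarrow> SS s \<le> SS t"
proof -
  assume st: "s \<le> t"
  have "hh s * hh (1 - t) \<le> hh t * hh (1 - s)"
    by (intro mult_mono hh_mono) (use st hh_nonneg in auto)
  then show ?thesis using SS_den[of s] SS_den[of t]
    by (simp add: SS_def divide_simps algebra_simps)
qed

lemma SS_deriv: "(SS has_real_derivative deriv SS t) (at t)"
  using Ck_deriv(2)[OF SS_Ck[of "Suc 0"]] .

lemma SS_deriv_nonneg: "deriv SS t \<ge> 0"
  by (rule mono_on_imp_deriv_nonneg[OF _ SS_deriv, of UNIV]) (auto intro: mono_onI SS_mono)

lemma SS_deriv_Ck: "Ck k (deriv SS)"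
  using Ck_deriv(1)[OF SS_Ck[of "Suc k"]] .

lemma SS_deriv_zero: "t < 0 \<or> t > 1 \<Longrightarrow> deriv SS t = 0"
proof -
  assume a: "t < 0 \<or> t > 1"
  show ?thesis
  proof (cases "t < 0")
    case True
    have "((\<lambda>_. 0) has_real_derivative 0) (at t)" by simp
    then have "(SS has_real_derivative 0) (at t)"
      by (rule has_field_derivative_transform_within_open[OF _, where S="{..<0}"]) (use True in \<open>auto simp: SS_0\<close>)
    then show ?thesis using SS_deriv DERIV_unique by blast
  next
    case False
    then have t1: "t > 1" using a by simp
    have "((\<lambda>_. 1) has_real_derivative 0) (at t)" by simp
    then have "(SS has_real_derivative 0) (at t)"
      by (rule has_field_derivative_transform_within_open[OF _, where S="{1<..}"]) (use t1 in \<open>auto simp: SS_1\<close>)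
    then show ?thesis using SS_deriv DERIV_unique by blast
  qed
qed


lemma lm_sets: "S \<in> lmeasurable \<Longrightarrow> S \<in> sets lebesgue" by (rule fmeasurableD)

lemma cont_meas: "continuous_on UNIV f \<Longrightarrow> S \<in> sets lebesgue \<Longrightarrow> f \<in> borel_measurable (lebesgue_on S)"
  by (rule continuous_imp_measurable_on_sets_lebesgue) (auto intro: continuous_on_subset)

lemma cont_bounded_on:
  fixes f :: "'a::euclidean_space \<Rightarrow> real"
  assumes "continuous_on UNIV f" "bounded S"
  shows "\<exists>M. \<forall>x\<in>S. \<bar>f x\<bar> \<le> M"
proof -
  have "compact (closure S)" using assms(2) by (simp add: compact_closure)
  then have "compact (f ` closure S)" using assms(1) by (meson compact_continuous_image continuous_on_subset top_greatest)
  then have "bounded (f ` closure S)" by (rule compact_imp_bounded)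
  then obtain M where "\<forall>y\<in>f ` closure S. norm y \<le> M" by (auto simp: bounded_iff)
  then show ?thesis using closure_subset by fastforce
qed

lemma bounded_integrable:
  fixes f :: "'a::euclidean_space \<Rightarrow> real"
  assumes S: "S \<in> lmeasurable" and f: "f \<in> borel_measurable (lebesgue_on S)" and M: "\<And>x. x \<in> S \<Longrightarrow> \<bar>f x\<bar> \<le> M"
  shows "integrable (lebesgue_on S) f"
proof -
  interpret finite_measure "lebesgue_on S" using S by (rule finite_measure_lebesgue_on)
  have "integrable (lebesgue_on S) (\<lambda>x. M)" by simp
  moreover have "AE x in lebesgue_on S. norm (f x) \<le> norm M"
    using M by (intro AE_I2) (auto simp: space_restrict_space intro: order_trans[OF _ abs_ge_self])
  ultimately show ?thesis using f Bochner_Integration.integrable_bound by blast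
qed

lemma cont_integrable:
  fixes f :: "'a::euclidean_space \<Rightarrow> real"
  assumes "continuous_on UNIV f" "bounded S" "S \<in> lmeasurable"
  shows "integrable (lebesgue_on S) f"
proof -
  obtain M where "\<forall>x\<in>S. \<bar>f x\<bar> \<le> M" using cont_bounded_on[OF assms(1,2)] by blast
  then show ?thesis using assms by (intro bounded_integrable cont_meas lm_sets) auto
qed

lemma L2_integrable:
  fixes S :: "'a::euclidean_space set"
  assumes f: "f \<in> L2_on S" and S: "S \<in> lmeasurable"
  shows "integrable (lebesgue_on S) f"
proof -
  interpret finite_measure "lebesgue_on S" using S by (rule finite_measure_lebesgue_on)
  have i: "integrable (lebesgue_on S) (\<lambda>x. 1 + (f x)\<^sup>2)" using f by (simp add: L2_on_def)
  have "\<bar>y\<bar> \<le> 1 + y\<^sup>2" for y :: real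
  proof (cases "\<bar>y\<bar> \<le> 1")
    case True then show ?thesis by (simp add: add_increasing2)
  next
    case False
    have "1 * \<bar>y\<bar> \<le> \<bar>y\<bar> * \<bar>y\<bar>" by (rule mult_right_mono) (use False in auto)
    then have "\<bar>y\<bar> \<le> \<bar>y\<bar> * \<bar>y\<bar>" by simp
    then show ?thesis by (simp add: power2_eq_square abs_mult[symmetric])
  qed
  then have "AE x in lebesgue_on S. norm (f x) \<le> norm (1 + (f x)\<^sup>2)" by (intro AE_I2) simp
  moreover have "f \<in> borel_measurable (lebesgue_on S)" using f by (simp add: L2_on_def)
  ultimately show ?thesis using i Bochner_Integration.integrable_bound by blast
qed

lemma quad_disc:
  fixes A B C :: real
  assumes q: "\<And>t. 0 \<le> A*t\<^sup>2 + 2*B*t + C" and A: "A \<ge> 0"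
  shows "B\<^sup>2 \<le> A*C"
proof (cases "A = 0")
  case True
  have "B = 0"
  proof (rule ccontr)
    assume "B \<noteq> 0"
    have "0 \<le> A*(-(C+1)/(2*B))\<^sup>2 + 2*B*(-(C+1)/(2*B)) + C" by (rule q)
    also have "\<dots> = -1" using True \<open>B \<noteq> 0\<close> by (simp add: field_simps)
    finally show False by simp
  qed
  then show ?thesis using True by simp
next
  case False
  then have Ap: "A > 0" using A by simp
  have "0 \<le> A*(-B/A)\<^sup>2 + 2*B*(-B/A) + C" by (rule q)
  also have "\<dots> = C - B\<^sup>2/A" using Ap by (simp add: field_simps power2_eq_square)
  finally have "B\<^sup>2/A \<le> C" by simp
  then show ?thesis using Ap by (simp add: divide_le_eq mult.commute)
qed

lemma CS_int:
  fixes f h :: "'b \<Rightarrow> real"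
  assumes f2: "integrable M (\<lambda>x. (f x)\<^sup>2)" and h2: "integrable M (\<lambda>x. (h x)\<^sup>2)"
    and fm: "f \<in> borel_measurable M" and hm: "h \<in> borel_measurable M"
  shows "integrable M (\<lambda>x. f x * h x)"
proof -
  have "integrable M (\<lambda>x. (f x)\<^sup>2 + (h x)\<^sup>2)" using f2 h2 by simp
  moreover have "AE x in M. norm (f x * h x) \<le> norm ((f x)\<^sup>2 + (h x)\<^sup>2)"
  proof (rule AE_I2)
    fix x
    have "2 * \<bar>f x\<bar> * \<bar>h x\<bar> \<le> (f x)\<^sup>2 + (h x)\<^sup>2"
      using sum_squares_bound[of "\<bar>f x\<bar>" "\<bar>h x\<bar>"] by simp
    moreover have "0 \<le> \<bar>f x\<bar> * \<bar>h x\<bar>" by simp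
    ultimately have "\<bar>f x\<bar> * \<bar>h x\<bar> \<le> (f x)\<^sup>2 + (h x)\<^sup>2" by linarith
    then show "norm (f x * h x) \<le> norm ((f x)\<^sup>2 + (h x)\<^sup>2)"
      by (simp add: abs_mult)
  qed
  moreover have "(\<lambda>x. f x * h x) \<in> borel_measurable M" using fm hm by simp
  ultimately show ?thesis using Bochner_Integration.integrable_bound by blast
qed

lemma CS:
  fixes f h :: "'b \<Rightarrow> real"
  assumes f2: "integrable M (\<lambda>x. (f x)\<^sup>2)" and h2: "integrable M (\<lambda>x. (h x)\<^sup>2)"
    and fm: "f \<in> borel_measurable M" and hm: "h \<in> borel_measurable M"
  shows "\<bar>LINT x|M. f x * h x\<bar> \<le> sqrt (LINT x|M. (f x)\<^sup>2) * sqrt (LINT x|M. (h x)\<^sup>2)"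
proof -
  have fh: "integrable M (\<lambda>x. f x * h x)" by (rule CS_int[OF assms])
  let ?A = "LINT x|M. (f x)\<^sup>2" and ?B = "LINT x|M. f x * h x" and ?C = "LINT x|M. (h x)\<^sup>2"
  have q: "0 \<le> ?A*t\<^sup>2 + 2*?B*t + ?C" for t
  proof -
    have "0 \<le> (LINT x|M. (t * f x + h x)\<^sup>2)" by (rule integral_nonneg_AE) simp
    also have "(LINT x|M. (t * f x + h x)\<^sup>2) = (LINT x|M. t\<^sup>2 * (f x)\<^sup>2 + (2*t) * (f x * h x) + (h x)\<^sup>2)"
      by (rule Bochner_Integration.integral_cong) (auto simp: power2_eq_square algebra_simps)
    also have "\<dots> = t\<^sup>2 * ?A + (2*t) * ?B + ?C"
      using f2 h2 fh by simp
    finally show ?thesis by (simp add: algebra_simps)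
  qed
  have A: "?A \<ge> 0" by (rule integral_nonneg_AE) simp
  have C: "?C \<ge> 0" by (rule integral_nonneg_AE) simp
  have "?B\<^sup>2 \<le> ?A * ?C" by (rule quad_disc[OF q A])
  then have "sqrt (?B\<^sup>2) \<le> sqrt (?A * ?C)" by (rule real_sqrt_le_mono)
  then show ?thesis by (simp add: real_sqrt_mult)
qed

lemma box_prod: "box (a,c) (b,d) = {a<..<b} \<times> {c<..<(d::real)}" for a b :: real
  by (auto simp: mem_box Basis_prod_def)

lemma rect_lm: "{a<..<b} \<times> {c<..<d} \<in> lmeasurable" for a b c d :: real
  by (rule lmeasurable_open) (auto intro: bounded_Times open_Times)

lemma rect_bounded: "bounded ({a<..<b} \<times> {c<..<d})" for a b c d :: real
  by (auto intro: bounded_Times)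

lemma ioo_lm: "{a<..<b} \<in> lmeasurable" for a b :: real by simp

lemma lint_ioo_hk:
  fixes F :: "real \<Rightarrow> real"
  assumes "continuous_on UNIV F"
  shows "(LINT x|lebesgue_on {a<..<b}. F x) = integral {a..b} F"
proof -
  have "integrable (lebesgue_on {a<..<b}) F" by (rule cont_integrable[OF assms]) auto
  then have "(LINT x|lebesgue_on {a<..<b}. F x) = integral {a<..<b} F"
    by (rule lebesgue_integral_eq_integral) simp
  then show ?thesis by (simp add: integral_open_interval_real)
qed

lemma rect_fubini:
  fixes F G :: "real \<Rightarrow> real"
  assumes F: "continuous_on UNIV F" and G: "continuous_on UNIV G"
  shows "(LINT z|lebesgue_on ({a<..<b} \<times> {c<..<d}). F (fst z) * G (snd z))
     = (LINT x|lebesgue_on {a<..<b}. F x) * (LINT y|lebesgue_on {c<..<d}. G y)"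
proof -
  let ?h = "\<lambda>z. F (fst z) * G (snd z)"
  have hc: "continuous_on UNIV ?h"
    by (intro continuous_on_mult continuous_on_compose2[OF F] continuous_on_compose2[OF G] continuous_on_fst continuous_on_snd continuous_on_id) auto
  have "integrable (lebesgue_on ({a<..<b} \<times> {c<..<d})) ?h"
    by (rule cont_integrable[OF hc rect_bounded rect_lm])
  then have "(LINT z|lebesgue_on ({a<..<b} \<times> {c<..<d}). ?h z) = integral ({a<..<b} \<times> {c<..<d}) ?h"
    by (rule lebesgue_integral_eq_integral) (rule lm_sets[OF rect_lm])
  also have "\<dots> = integral (cbox (a,c) (b,d)) ?h"
    by (simp add: integral_open_interval box_prod[symmetric])
  also have "\<dots> = integral (cbox a b) (\<lambda>x. integral (cbox c d) (\<lambda>y. ?h (x, y)))"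
    by (rule integral_prod_continuous) (rule continuous_on_subset[OF hc], simp)
  also have "\<dots> = integral (cbox a b) (\<lambda>x. F x * integral (cbox c d) G)"
    by simp
  also have "\<dots> = integral (cbox a b) F * integral (cbox c d) G"
    by simp
  also have "\<dots> = (LINT x|lebesgue_on {a<..<b}. F x) * (LINT y|lebesgue_on {c<..<d}. G y)"
    by (simp add: lint_ioo_hk[OF F] lint_ioo_hk[OF G])
  finally show ?thesis .
qed


definition eta :: "real \<Rightarrow> real \<Rightarrow> real" where "eta n t = SS (n*t - 1)"
definition Kn :: "real \<Rightarrow> real \<Rightarrow> real" where "Kn n t = n * deriv SS (n*t - 1)"
definition chi :: "real \<Rightarrow> real \<Rightarrow> real" where "chi l t = SS (5 + (-6/l)*t)"
definition chid :: "real \<Rightarrow> real \<Rightarrow> real" where "chid l t = (-6/l) * deriv SS (5 + (-6/l)*t)"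

lemma affine_Ck: "Ck k (\<lambda>t::real. a + b*t)"
  by (rule Ck_add[OF Ck_const Ck_cmult[OF Ck_id]])

lemma eta_Ck: "Ck k (eta n)"
proof -
  have e: "eta n = (\<lambda>t. SS (-1 + n*t))" by (simp add: fun_eq_iff eta_def)
  show ?thesis unfolding e by (rule Ck_compose[OF SS_Ck affine_Ck])
qed

lemma chi_Ck: "Ck k (chi l)"
proof -
  have e: "chi l = (\<lambda>t. SS (5 + (-6/l)*t))" by (simp add: fun_eq_iff chi_def)
  show ?thesis unfolding e by (rule Ck_compose[OF SS_Ck affine_Ck])
qed

lemma Kn_cont: "continuous_on UNIV (Kn n)"
proof -
  have e: "Kn n = (\<lambda>t. n * deriv SS (-1 + n*t))" by (simp add: fun_eq_iff Kn_def)
  show ?thesis unfolding e by (rule Ck_cont[OF Ck_cmult[OF Ck_compose[OF SS_deriv_Ck affine_Ck]]])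
qed

lemma chid_cont: "continuous_on UNIV (chid l)"
proof -
  have e: "chid l = (\<lambda>t. (-6/l) * deriv SS (5 + (-6/l)*t))" by (simp add: fun_eq_iff chid_def)
  show ?thesis unfolding e by (rule Ck_cont[OF Ck_cmult[OF Ck_compose[OF SS_deriv_Ck affine_Ck]]])
qed

lemma eta_cont: "continuous_on UNIV (eta n)" using Ck_cont[OF eta_Ck[of 0]] .
lemma chi_cont: "continuous_on UNIV (chi l)" using Ck_cont[OF chi_Ck[of 0]] .

lemma eta_deriv: "(eta n has_real_derivative Kn n t) (at t)"
proof -
  have "((\<lambda>t. SS (n*t - 1)) has_real_derivative deriv SS (n*t - 1) * n) (at t)"
    by (rule DERIV_chain2[OF SS_deriv]) (auto intro!: derivative_eq_intros)
  then show ?thesis by (simp add: eta_def[abs_def] Kn_def mult.commute)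
qed

lemma chi_deriv: "(chi l has_real_derivative chid l t) (at t)"
proof -
  have d: "((\<lambda>t. 5 + (-6/l)*t) has_real_derivative (-6/l)) (at t)"
    using DERIV_add[OF DERIV_const DERIV_cmult[OF DERIV_ident, of "-6/l"]] by simp
  have "((\<lambda>t. SS (5 + (-6/l)*t)) has_real_derivative deriv SS (5 + (-6/l)*t) * (-6/l)) (at t)"
    by (rule DERIV_chain2[OF SS_deriv d])
  then show ?thesis by (simp only: chi_def[abs_def] chid_def mult.commute)
qed

lemma eta_nonneg: "eta n t \<ge> 0" by (simp add: eta_def SS_nonneg)
lemma eta_le1: "eta n t \<le> 1" by (simp add: eta_def SS_le1)
lemma chi_nonneg: "chi l t \<ge> 0" by (simp add: chi_def SS_nonneg)
lemma chi_le1: "chi l t \<le> 1" by (simp add: chi_def SS_le1)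

lemma eta_zero: "n > 0 \<Longrightarrow> t \<le> 1/n \<Longrightarrow> eta n t = 0"
  unfolding eta_def by (rule SS_0) (simp add: field_simps)
lemma eta_one: "n > 0 \<Longrightarrow> t \<ge> 2/n \<Longrightarrow> eta n t = 1"
  unfolding eta_def by (rule SS_1) (simp add: field_simps)
lemma Kn_zero: "n > 0 \<Longrightarrow> t < 1/n \<or> t > 2/n \<Longrightarrow> Kn n t = 0"
  unfolding Kn_def by (simp, rule SS_deriv_zero) (auto simp: field_simps)
lemma Kn_nonneg: "n \<ge> 0 \<Longrightarrow> Kn n t \<ge> 0"
  unfolding Kn_def by (simp add: SS_deriv_nonneg)
lemma chi_zero: "l > 0 \<Longrightarrow> t \<ge> 5*l/6 \<Longrightarrow> chi l t = 0"
  unfolding chi_def by (rule SS_0) (simp add: field_simps)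
lemma chi_one: "l > 0 \<Longrightarrow> t \<le> 2*l/3 \<Longrightarrow> chi l t = 1"
  unfolding chi_def by (rule SS_1) (simp add: field_simps)

lemma dSS_bound: "\<exists>M. \<forall>t. \<bar>deriv SS t\<bar> \<le> M"
proof -
  obtain M where M: "\<forall>x\<in>{0..1}. \<bar>deriv SS x\<bar> \<le> M"
    using cont_bounded_on[OF Ck_cont[OF SS_deriv_Ck[of 0]], of "{0..1}"] by auto
  have "\<bar>deriv SS t\<bar> \<le> M" for t
  proof (cases "t < 0 \<or> t > 1")
    case True
    then have "deriv SS t = 0" by (rule SS_deriv_zero)
    moreover have "0 \<le> M" using M[rule_format, of 0] by simp
    ultimately show ?thesis by simp
  next
    case False then show ?thesis using M by auto
  qed
  then show ?thesis by blast
qed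

lemma chid_bound: "l > 0 \<Longrightarrow> \<exists>M. \<forall>t. \<bar>chid l t\<bar> \<le> M"
proof -
  assume l: "l > 0"
  obtain M where M: "\<And>t. \<bar>deriv SS t\<bar> \<le> M" using dSS_bound by blast
  have "\<bar>chid l t\<bar> \<le> 6/l * M" for t
  proof -
    have "\<bar>chid l t\<bar> = (6/l) * \<bar>deriv SS (5 + (-6/l)*t)\<bar>" using l by (simp add: chid_def abs_mult)
    also have "\<dots> \<le> 6/l * M" by (rule mult_left_mono[OF M]) (use l in simp)
    finally show ?thesis .
  qed
  then show ?thesis by blast
qed


locale trace_cfg =
  fixes L1 L2 lam :: real and W u :: "real \<times> real \<Rightarrow> real" and sg l l' :: real
    and B :: "real \<Rightarrow> real \<times> real"
  assumes L1: "L1 > 0" and L2: "L2 > 0"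
  and W: "bounded_linear W" and u: "bounded_linear u"
  and mem: "\<And>z. z \<in> {0<..<L1} \<times> {0<..<L2} \<longleftrightarrow> u z \<in> {0<..<l} \<and> W z \<in> {0<..<l'}"
  and lp: "l > 0" and lp': "l' > 0"
  and sg: "sg = 1 \<or> sg = -1"
  and beta: "sg * (u (0,1) + lam * u (1,0)) \<noteq> 0"
  and fub: "\<And>(F::real\<Rightarrow>real) (G::real\<Rightarrow>real). continuous_on UNIV F \<Longrightarrow> continuous_on UNIV G \<Longrightarrow>
     (LINT z|lebesgue_on ({0<..<L1} \<times> {0<..<L2}). F (u z) * G (W z))
       = (LINT x|lebesgue_on {0<..<l}. F x) * (LINT y|lebesgue_on {0<..<l'}. G y)"
  and nrm: "\<And>z. norm z \<le> \<bar>u z\<bar> + \<bar>W z\<bar>"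
  and Bc: "continuous_on UNIV B"
  and Bd: "\<And>z. dist z (B (W z)) = \<bar>sg * u z + (if sg = 1 then 0 else l)\<bar>"
begin

definition "Om = {0<..<L1} \<times> {0<..<L2}"
definition "dd = (if sg = 1 then 0 else l)"
definition "P z = sg * u z + dd"
definition "al = W (0,1) + lam * W (1,0)"
definition "be = sg * (u (0,1) + lam * u (1,0))"
definition "mm n t = chi l t * eta n t"
definition "mmd n t = chid l t * eta n t + Kn n t * chi l t"
definition "psi n \<phi> z = \<phi> (W z) * mm n (P z)"

lemma be_nz: "be \<noteq> 0" using beta by (simp add: be_def)

lemma Om_lm: "Om \<in> lmeasurable" unfolding Om_def by (rule rect_lm)
lemma Om_sets: "Om \<in> sets lebesgue" using Om_lm by (rule lm_sets)
lemma Om_bounded: "bounded Om" unfolding Om_def by (rule rect_bounded)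
lemma space_Om: "space (lebesgue_on Om) = Om" by (simp add: space_restrict_space)

lemma memOm: "z \<in> Om \<longleftrightarrow> u z \<in> {0<..<l} \<and> W z \<in> {0<..<l'}"
  unfolding Om_def by (rule mem)

lemma P_pos: "z \<in> Om \<Longrightarrow> P z > 0"
  using sg memOm[of z] by (auto simp: P_def dd_def)

lemma P_inv:
  assumes "n > 0" "1/n \<le> P z" "P z \<le> 5*l/6"
  shows "u z \<in> {0<..<l}"
proof -
  have "0 < 1/n" using assms(1) by simp
  then have p: "0 < P z" using assms(2) by linarith
  then show ?thesis using sg assms(3) lp by (auto simp: P_def dd_def)
qed

lemma P_Ck: "Ck k P"
proof -
  have e: "P = (\<lambda>z. dd + sg * u z)" by (simp add: fun_eq_iff P_def)
  show ?thesis unfolding e by (rule Ck_add[OF Ck_const Ck_cmult[OF Ck_linear[OF u]]])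
qed

lemma P_cont: "continuous_on UNIV P" using Ck_cont[OF P_Ck[of 0]] .
lemma W_cont: "continuous_on UNIV W" using W by (rule linear_continuous_on)
lemma u_cont: "continuous_on UNIV u" using u by (rule linear_continuous_on)

lemma P_deriv: "(P has_derivative (\<lambda>v. sg * u v)) (at z)"
proof -
  have "((\<lambda>z. sg * u z) has_derivative (\<lambda>v. sg * u v)) (at z)"
    by (rule has_derivative_mult_right[OF bounded_linear_imp_has_derivative[OF u]])
  from has_derivative_add[OF this has_derivative_const[of dd]]
  show ?thesis by (simp add: P_def[abs_def])
qed

lemma mm_deriv: "(mm n has_real_derivative mmd n t) (at t)"
  unfolding mm_def[abs_def] mmd_def using DERIV_mult[OF chi_deriv eta_deriv] by simp

lemma mm_Ck: "Ck k (mm n)"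
proof -
  have e: "mm n = (\<lambda>t. chi l t * eta n t)" by (simp add: fun_eq_iff mm_def)
  show ?thesis unfolding e by (rule Ck_mult[OF chi_Ck eta_Ck])
qed

lemma mmd_cont: "continuous_on UNIV (mmd n)"
  unfolding mmd_def[abs_def]
  by (intro continuous_on_add continuous_on_mult chid_cont eta_cont Kn_cont chi_cont)

lemma mm_cont: "continuous_on UNIV (mm n)" using Ck_cont[OF mm_Ck[of 0]] .

lemma test_props:
  assumes "test_fun {0<..<l'} \<phi>"
  shows "\<And>k. Ck k \<phi>" "continuous_on UNIV \<phi>" "continuous_on UNIV (deriv \<phi>)"
    "\<And>x. (\<phi> has_real_derivative deriv \<phi> x) (at x)"
    "compact (closure {x. \<phi> x \<noteq> 0})" "closure {x. \<phi> x \<noteq> 0} \<subseteq> {0<..<l'}"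
proof -
  show k: "\<And>k. Ck k \<phi>" using assms by (simp add: test_fun_def smooth_fun_def)
  show "continuous_on UNIV \<phi>" using Ck_cont[OF k[of 0]] .
  show "continuous_on UNIV (deriv \<phi>)" using Ck_cont[OF Ck_deriv(1)[OF k[of "Suc 0"]]] .
  show "\<And>x. (\<phi> has_real_derivative deriv \<phi> x) (at x)" using Ck_deriv(2)[OF k[of "Suc 0"]] .
  show "compact (closure {x. \<phi> x \<noteq> 0})" "closure {x. \<phi> x \<noteq> 0} \<subseteq> {0<..<l'}"
    using assms by (auto simp: test_fun_def)
qed

lemma psi_deriv:
  assumes "\<And>x. (\<phi> has_real_derivative deriv \<phi> x) (at x)"
  shows "(psi n \<phi> has_derivative
     (\<lambda>v. \<phi> (W z) * (mmd n (P z) * (sg * u v)) + deriv \<phi> (W z) * W v * mm n (P z))) (at z)"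
proof -
  have d1: "((\<lambda>z. \<phi> (W z)) has_derivative (\<lambda>v. deriv \<phi> (W z) * W v)) (at z)"
  proof -
    have "(\<phi> has_derivative (\<lambda>x. deriv \<phi> (W z) * x)) (at (W z))"
      using assms[of "W z"] by (simp add: has_field_derivative_def)
    from has_derivative_compose[OF bounded_linear_imp_has_derivative[OF W] this]
    show ?thesis .
  qed
  have d2: "((\<lambda>z. mm n (P z)) has_derivative (\<lambda>v. mmd n (P z) * (sg * u v))) (at z)"
  proof -
    have "(mm n has_derivative (\<lambda>x. mmd n (P z) * x)) (at (P z))"
      using mm_deriv[of n "P z"] by (simp add: has_field_derivative_def)
    from has_derivative_compose[OF P_deriv this] show ?thesis .
  qed
  from has_derivative_mult[OF d1 d2] show ?thesis by (simp add: psi_def[abs_def])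
qed

lemma psi_D:
  assumes "\<And>x. (\<phi> has_real_derivative deriv \<phi> x) (at x)"
  shows "pdy (psi n \<phi>) z + lam * pdx (psi n \<phi>) z
     = al * deriv \<phi> (W z) * mm n (P z) + be * \<phi> (W z) * mmd n (P z)"
proof -
  note e = fd_eq[OF psi_deriv[OF assms]]
  have l1: "W (0,1) + lam * W (1,0) = al" by (simp add: al_def)
  show ?thesis unfolding pdx_def pdy_def e al_def be_def by (simp add: algebra_simps)
qed

lemma psi_test:
  assumes n: "n > 0" and t: "test_fun {0<..<l'} \<phi>"
  shows "test_fun Om (psi n \<phi>)"
proof -
  note tp = test_props[OF t]
  have e: "psi n \<phi> = (\<lambda>z. \<phi> (W z) * mm n (P z))" by (simp add: fun_eq_iff psi_def)
  have sm: "smooth_fun (psi n \<phi>)"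
    unfolding smooth_fun_def e
    by (intro allI Ck_mult Ck_compose[OF tp(1) Ck_linear[OF W]] Ck_compose[OF mm_Ck P_Ck])
  define C where "C = closure {x. \<phi> x \<noteq> 0}"
  define K where "K = (W -` C) \<inter> {z. 1/n \<le> P z} \<inter> {z. P z \<le> 5*l/6}"
  have Cc: "compact C" using tp(5) by (simp add: C_def)
  have CO: "C \<subseteq> {0<..<l'}" using tp(6) by (simp add: C_def)
  have sub: "{z. psi n \<phi> z \<noteq> 0} \<subseteq> K"
  proof
    fix z assume "z \<in> {z. psi n \<phi> z \<noteq> 0}"
    then have a: "\<phi> (W z) \<noteq> 0" and b: "chi l (P z) \<noteq> 0" and c: "eta n (P z) \<noteq> 0"
      by (auto simp: psi_def mm_def)
    have "W z \<in> {x. \<phi> x \<noteq> 0}" using a by simp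
    then have "W z \<in> C" unfolding C_def by (rule subsetD[OF closure_subset])
    moreover have "P z \<le> 5*l/6" using b chi_zero[OF lp, of "P z"] by linarith
    moreover have "1/n \<le> P z" using c eta_zero[OF n, of "P z"] by linarith
    ultimately show "z \<in> K" by (simp add: K_def)
  qed
  have c1: "closed (W -` C)"
    by (rule continuous_closed_vimage[OF compact_imp_closed[OF Cc]]) (rule linear_continuous_at[OF W])
  have c2: "closed {z. 1/n \<le> P z}" by (rule closed_Collect_le[OF continuous_on_const P_cont])
  have c3: "closed {z. P z \<le> 5*l/6}" by (rule closed_Collect_le[OF P_cont continuous_on_const])
  have Kcl: "closed K" unfolding K_def by (intro closed_Int c1 c2 c3)
  obtain R where R: "\<And>s. s \<in> C \<Longrightarrow> \<bar>s\<bar> \<le> R"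
    using compact_imp_bounded[OF Cc] by (auto simp: bounded_iff)
  have KO: "K \<subseteq> Om"
  proof
    fix z assume z: "z \<in> K"
    then have "u z \<in> {0<..<l}" using P_inv[OF n] by (auto simp: K_def)
    moreover have "W z \<in> {0<..<l'}" using z CO by (auto simp: K_def)
    ultimately show "z \<in> Om" by (simp add: memOm)
  qed
  have Kb: "bounded K"
  proof -
    have "norm z \<le> l + R" if z: "z \<in> K" for z
    proof -
      have "u z \<in> {0<..<l}" using z KO memOm by blast
      moreover have "\<bar>W z\<bar> \<le> R" using z R by (auto simp: K_def)
      ultimately show ?thesis using nrm[of z] by auto
    qed
    then show ?thesis unfolding bounded_iff by blast
  qed
  have Kc: "compact K" using Kb Kcl by (simp add: compact_eq_bounded_closed)
  have cl: "closure {z. psi n \<phi> z \<noteq> 0} \<subseteq> K" by (rule closure_minimal[OF sub Kcl])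
  have "compact (closure {z. psi n \<phi> z \<noteq> 0})"
  proof -
    have "closure {z. psi n \<phi> z \<noteq> 0} = K \<inter> closure {z. psi n \<phi> z \<noteq> 0}" using cl by blast
    also have "compact \<dots>" by (rule compact_Int_closed[OF Kc closed_closure])
    finally show ?thesis .
  qed
  then show ?thesis using sm cl KO by (simp add: test_fun_def)
qed

end


lemma eventually_Suc_ge: "eventually (\<lambda>k. real (Suc k) \<ge> c) sequentially"
proof -
  obtain N :: nat where "c \<le> real N" using real_arch_simple by blast
  then show ?thesis by (intro eventually_sequentiallyI[of N]) auto
qed

context trace_cfg begin

lemma cont_int_Om: "continuous_on UNIV (b :: real \<times> real \<Rightarrow> real) \<Longrightarrow> integrable (lebesgue_on Om) b"
  by (rule cont_integrable[OF _ Om_bounded Om_lm])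

lemma cont_meas_Om: "continuous_on UNIV (b :: real \<times> real \<Rightarrow> real) \<Longrightarrow> b \<in> borel_measurable (lebesgue_on Om)"
  by (rule cont_meas[OF _ Om_sets])

lemma L2_meas: "f \<in> L2_on Om \<Longrightarrow> f \<in> borel_measurable (lebesgue_on Om)"
  by (simp add: L2_on_def)

lemma L2_sq: "f \<in> L2_on Om \<Longrightarrow> integrable (lebesgue_on Om) (\<lambda>z. (f z)\<^sup>2)"
  by (simp add: L2_on_def)

lemma L2_prod_int:
  assumes f: "f \<in> L2_on Om" and b: "continuous_on UNIV b"
  shows "integrable (lebesgue_on Om) (\<lambda>z. f z * b z)"
proof -
  have "continuous_on UNIV (\<lambda>z. (b z)\<^sup>2)" using b by (intro continuous_intros)
  then have "integrable (lebesgue_on Om) (\<lambda>z. (b z)\<^sup>2)" by (rule cont_int_Om)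
  then show ?thesis using CS_int[OF L2_sq[OF f] _ L2_meas[OF f] cont_meas_Om[OF b]] by blast
qed

lemma L2_prod_bound:
  assumes f: "f \<in> L2_on Om" and b: "continuous_on UNIV b"
  shows "\<bar>LINT z|lebesgue_on Om. f z * b z\<bar> \<le> L2norm Om f * sqrt (LINT z|lebesgue_on Om. (b z)\<^sup>2)"
proof -
  have "continuous_on UNIV (\<lambda>z. (b z)\<^sup>2)" using b by (intro continuous_intros)
  then have "integrable (lebesgue_on Om) (\<lambda>z. (b z)\<^sup>2)" by (rule cont_int_Om)
  from CS[OF L2_sq[OF f] this L2_meas[OF f] cont_meas_Om[OF b]]
  show ?thesis by (simp add: L2norm_def)
qed

lemma lint_one: "(LINT x|lebesgue_on {0<..<l}. (1::real)) = l"
  using lint_ioo_hk[of "\<lambda>_. 1" 0 l] lp by simp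

lemma J_bound:
  assumes \<phi>: "continuous_on UNIV \<phi>" and c: "continuous_on UNIV c" and M: "\<And>z. \<bar>c z\<bar> \<le> M"
  shows "sqrt (LINT z|lebesgue_on Om. (\<phi> (W z) * c z)\<^sup>2)
     \<le> M * sqrt (l * (LINT y|lebesgue_on {0<..<l'}. (\<phi> y)\<^sup>2))"
proof -
  have M0: "0 \<le> M" using M[of 0] by simp
  have c1: "continuous_on UNIV (\<lambda>z. \<phi> (W z))" by (rule continuous_on_compose2[OF \<phi> W_cont]) auto
  have i1: "integrable (lebesgue_on Om) (\<lambda>z. (\<phi> (W z) * c z)\<^sup>2)"
    by (rule cont_int_Om) (intro continuous_intros c1 c)
  have i2: "integrable (lebesgue_on Om) (\<lambda>z. M\<^sup>2 * (1 * (\<phi> (W z))\<^sup>2))"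
    by (rule cont_int_Om) (intro continuous_intros c1)
  have "(LINT z|lebesgue_on Om. (\<phi> (W z) * c z)\<^sup>2) \<le> (LINT z|lebesgue_on Om. M\<^sup>2 * (1 * (\<phi> (W z))\<^sup>2))"
  proof (rule integral_mono[OF i1 i2])
    fix z
    have "\<bar>c z\<bar>\<^sup>2 \<le> M\<^sup>2" by (rule power_mono[OF M abs_ge_zero])
    then have "(c z)\<^sup>2 \<le> M\<^sup>2" by simp
    then have "(\<phi> (W z))\<^sup>2 * (c z)\<^sup>2 \<le> (\<phi> (W z))\<^sup>2 * M\<^sup>2" by (rule mult_left_mono) simp
    then show "(\<phi> (W z) * c z)\<^sup>2 \<le> M\<^sup>2 * (1 * (\<phi> (W z))\<^sup>2)" by (simp add: power_mult_distrib mult.commute)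
  qed
  also have "\<dots> = M\<^sup>2 * (LINT z|lebesgue_on Om. (\<lambda>_. 1) (u z) * (\<lambda>y. (\<phi> y)\<^sup>2) (W z))" by simp
  also have "\<dots> = M\<^sup>2 * (l * (LINT y|lebesgue_on {0<..<l'}. (\<phi> y)\<^sup>2))"
    using fub[of "\<lambda>_. 1" "\<lambda>y. (\<phi> y)\<^sup>2"] \<phi> lint_one unfolding Om_def by (simp add: continuous_intros)
  finally have "sqrt (LINT z|lebesgue_on Om. (\<phi> (W z) * c z)\<^sup>2) \<le> sqrt (M\<^sup>2 * (l * (LINT y|lebesgue_on {0<..<l'}. (\<phi> y)\<^sup>2)))"
    by (rule real_sqrt_le_mono)
  also have "\<dots> = M * sqrt (l * (LINT y|lebesgue_on {0<..<l'}. (\<phi> y)\<^sup>2))"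
    using M0 by (simp add: real_sqrt_mult)
  finally show ?thesis .
qed

lemma H1_bounds:
  shows "sqrt (LINT y|lebesgue_on {0<..<l'}. (\<phi> y)\<^sup>2) \<le> H1norm 0 l' \<phi>"
    and "sqrt (LINT y|lebesgue_on {0<..<l'}. (deriv \<phi> y)\<^sup>2) \<le> H1norm 0 l' \<phi>"
proof -
  have a: "0 \<le> (LINT y|lebesgue_on {0<..<l'}. (\<phi> y)\<^sup>2)" by (rule integral_nonneg_AE) simp
  have b: "0 \<le> (LINT y|lebesgue_on {0<..<l'}. (deriv \<phi> y)\<^sup>2)" by (rule integral_nonneg_AE) simp
  show "sqrt (LINT y|lebesgue_on {0<..<l'}. (\<phi> y)\<^sup>2) \<le> H1norm 0 l' \<phi>"
    unfolding H1norm_def using b by (intro real_sqrt_le_mono) simp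
  show "sqrt (LINT y|lebesgue_on {0<..<l'}. (deriv \<phi> y)\<^sup>2) \<le> H1norm 0 l' \<phi>"
    unfolding H1norm_def using a by (intro real_sqrt_le_mono) simp
qed

lemma eta_eventually_one:
  assumes "z \<in> Om"
  shows "eventually (\<lambda>k. eta (real (Suc k)) (P z) = 1) sequentially"
proof -
  have p: "P z > 0" using P_pos[OF assms] .
  show ?thesis
  proof (rule eventually_mono[OF eventually_Suc_ge[of "2 / P z"]])
    fix k assume k: "2 / P z \<le> real (Suc k)"
    have "2 / real (Suc k) \<le> P z" using k p by (simp add: field_simps)
    then show "eta (real (Suc k)) (P z) = 1" by (intro eta_one) auto
  qed
qed

lemma dct_eta:
  assumes f: "f \<in> L2_on Om" and b: "continuous_on UNIV b"
  shows "(\<lambda>k. LINT z|lebesgue_on Om. f z * (b z * eta (real (Suc k)) (P z)))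
     \<longlonglongrightarrow> (LINT z|lebesgue_on Om. f z * b z)"
proof (rule integral_dominated_convergence[where w="\<lambda>z. \<bar>f z * b z\<bar>"])
  have fm: "f \<in> borel_measurable (lebesgue_on Om)" by (rule L2_meas[OF f])
  have bm: "b \<in> borel_measurable (lebesgue_on Om)" by (rule cont_meas_Om[OF b])
  show "(\<lambda>z. f z * b z) \<in> borel_measurable (lebesgue_on Om)" using fm bm by simp
  show "(\<lambda>z. f z * (b z * eta (real (Suc k)) (P z))) \<in> borel_measurable (lebesgue_on Om)" for k
  proof -
    have "continuous_on UNIV (\<lambda>z. b z * eta (real (Suc k)) (P z))"
      by (intro continuous_on_mult b continuous_on_compose2[OF eta_cont P_cont]) auto
    then have "(\<lambda>z. b z * eta (real (Suc k)) (P z)) \<in> borel_measurable (lebesgue_on Om)" by (rule cont_meas_Om)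
    then show ?thesis using fm by simp
  qed
  show "integrable (lebesgue_on Om) (\<lambda>z. \<bar>f z * b z\<bar>)" using L2_prod_int[OF f b] by simp
  show "AE z in lebesgue_on Om. (\<lambda>k. f z * (b z * eta (real (Suc k)) (P z))) \<longlonglongrightarrow> f z * b z"
  proof (rule AE_I2)
    fix z assume "z \<in> space (lebesgue_on Om)"
    then have z: "z \<in> Om" by (simp add: space_Om)
    show "(\<lambda>k. f z * (b z * eta (real (Suc k)) (P z))) \<longlonglongrightarrow> f z * b z"
      by (rule tendsto_eventually) (rule eventually_mono[OF eta_eventually_one[OF z]], simp)
  qed
  show "AE z in lebesgue_on Om. norm (f z * (b z * eta (real (Suc k)) (P z))) \<le> \<bar>f z * b z\<bar>" for k
  proof (rule AE_I2)
    fix z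
    have "\<bar>f z * b z\<bar> * \<bar>eta (real (Suc k)) (P z)\<bar> \<le> \<bar>f z * b z\<bar> * 1"
      by (rule mult_left_mono) (use eta_nonneg eta_le1 in auto)
    then show "norm (f z * (b z * eta (real (Suc k)) (P z))) \<le> \<bar>f z * b z\<bar>"
      by (simp add: abs_mult mult.assoc)
  qed
qed

lemma cW: "continuous_on UNIV f \<Longrightarrow> continuous_on UNIV (\<lambda>z. f (W z))"
  by (rule continuous_on_compose2[OF _ W_cont]) auto
lemma cP: "continuous_on UNIV f \<Longrightarrow> continuous_on UNIV (\<lambda>z. f (P z))"
  by (rule continuous_on_compose2[OF _ P_cont]) auto

definition "seqT \<theta> \<phi> n = (LINT z|lebesgue_on Om. \<theta> z * (\<phi> (W z) * Kn n (P z)))"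

definition "Vlim \<theta> g \<phi> = -(1/be) * ((LINT z|lebesgue_on Om. g z * (\<phi> (W z) * chi l (P z)))
    + al * (LINT z|lebesgue_on Om. \<theta> z * (deriv \<phi> (W z) * chi l (P z)))
    + be * (LINT z|lebesgue_on Om. \<theta> z * (\<phi> (W z) * chid l (P z))))"

lemma Kn_chi: "n > 0 \<Longrightarrow> n \<ge> 3/l \<Longrightarrow> Kn n t * chi l t = Kn n t"
proof (cases "Kn n t = 0")
  case False
  assume n: "n > 0" "n \<ge> 3/l"
  have "t \<le> 2/n" using False Kn_zero[OF n(1), of t] by linarith
  also have "2/n \<le> 2*l/3" using n lp by (simp add: field_simps)
  finally show ?thesis using chi_one[OF lp] by simp
qed simp

lemma seq_identity:
  assumes th: "\<theta> \<in> L2_on Om" and g: "g \<in> L2_on Om" and td: "transport_deriv lam Om \<theta> g"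
    and t: "test_fun {0<..<l'} \<phi>" and n: "n > 0" "n \<ge> 3/l"
  shows "seqT \<theta> \<phi> n = -(1/be) * ((LINT z|lebesgue_on Om. g z * ((\<phi> (W z) * chi l (P z)) * eta n (P z)))
    + al * (LINT z|lebesgue_on Om. \<theta> z * ((deriv \<phi> (W z) * chi l (P z)) * eta n (P z)))
    + be * (LINT z|lebesgue_on Om. \<theta> z * ((\<phi> (W z) * chid l (P z)) * eta n (P z))))"
proof -
  note tp = test_props[OF t]
  have c1: "continuous_on UNIV (\<lambda>z. (\<phi> (W z) * chi l (P z)) * eta n (P z))"
    by (intro continuous_on_mult cW cP tp(2) chi_cont eta_cont)
  have c2: "continuous_on UNIV (\<lambda>z. (deriv \<phi> (W z) * chi l (P z)) * eta n (P z))"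
    by (intro continuous_on_mult cW cP tp(3) chi_cont eta_cont)
  have c3: "continuous_on UNIV (\<lambda>z. (\<phi> (W z) * chid l (P z)) * eta n (P z))"
    by (intro continuous_on_mult cW cP tp(2) chid_cont eta_cont)
  have c4: "continuous_on UNIV (\<lambda>z. \<phi> (W z) * Kn n (P z))"
    by (intro continuous_on_mult cW cP tp(2) Kn_cont)
  let ?A = "LINT z|lebesgue_on Om. g z * ((\<phi> (W z) * chi l (P z)) * eta n (P z))"
  let ?B = "LINT z|lebesgue_on Om. \<theta> z * ((deriv \<phi> (W z) * chi l (P z)) * eta n (P z))"
  let ?C = "LINT z|lebesgue_on Om. \<theta> z * ((\<phi> (W z) * chid l (P z)) * eta n (P z))"
  have "(LINT z|lebesgue_on Om. g z * psi n \<phi> z) = - (LINT z|lebesgue_on Om. \<theta> z * (pdy (psi n \<phi>) z + lam * pdx (psi n \<phi>) z))"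
    using td psi_test[OF n(1) t] by (simp add: transport_deriv_def)
  moreover have "(LINT z|lebesgue_on Om. g z * psi n \<phi> z) = ?A"
    by (rule Bochner_Integration.integral_cong) (simp_all add: psi_def mm_def mult.assoc)
  moreover have "(LINT z|lebesgue_on Om. \<theta> z * (pdy (psi n \<phi>) z + lam * pdx (psi n \<phi>) z))
     = (LINT z|lebesgue_on Om. al * (\<theta> z * ((deriv \<phi> (W z) * chi l (P z)) * eta n (P z)))
          + be * (\<theta> z * ((\<phi> (W z) * chid l (P z)) * eta n (P z)))
          + be * (\<theta> z * (\<phi> (W z) * Kn n (P z))))"
  proof (rule Bochner_Integration.integral_cong[OF refl])
    fix z
    have k: "Kn n (P z) * chi l (P z) = Kn n (P z)" by (rule Kn_chi[OF n])
    show "\<theta> z * (pdy (psi n \<phi>) z + lam * pdx (psi n \<phi>) z)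
     = al * (\<theta> z * ((deriv \<phi> (W z) * chi l (P z)) * eta n (P z)))
          + be * (\<theta> z * ((\<phi> (W z) * chid l (P z)) * eta n (P z)))
          + be * (\<theta> z * (\<phi> (W z) * Kn n (P z)))"
      unfolding psi_D[OF tp(4)] mmd_def mm_def k
      by (simp add: algebra_simps)
  qed
  moreover have "(LINT z|lebesgue_on Om. al * (\<theta> z * ((deriv \<phi> (W z) * chi l (P z)) * eta n (P z)))
          + be * (\<theta> z * ((\<phi> (W z) * chid l (P z)) * eta n (P z)))
          + be * (\<theta> z * (\<phi> (W z) * Kn n (P z)))) = al * ?B + be * ?C + be * seqT \<theta> \<phi> n"
    using L2_prod_int[OF th c2] L2_prod_int[OF th c3] L2_prod_int[OF th c4]
    by (simp add: seqT_def)
  ultimately have "?A = - (al * ?B + be * ?C + be * seqT \<theta> \<phi> n)" by simp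
  then show ?thesis using be_nz by (simp add: field_simps)
qed

lemma conv_X1:
  assumes th: "\<theta> \<in> L2_on Om" and g: "g \<in> L2_on Om" and td: "transport_deriv lam Om \<theta> g"
    and t: "test_fun {0<..<l'} \<phi>"
  shows "(\<lambda>k. seqT \<theta> \<phi> (real (Suc k))) \<longlonglongrightarrow> Vlim \<theta> g \<phi>"
proof -
  note tp = test_props[OF t]
  have c1: "continuous_on UNIV (\<lambda>z. \<phi> (W z) * chi l (P z))"
    by (intro continuous_on_mult cW cP tp(2) chi_cont)
  have c2: "continuous_on UNIV (\<lambda>z. deriv \<phi> (W z) * chi l (P z))"
    by (intro continuous_on_mult cW cP tp(3) chi_cont)
  have c3: "continuous_on UNIV (\<lambda>z. \<phi> (W z) * chid l (P z))"
    by (intro continuous_on_mult cW cP tp(2) chid_cont)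
  let ?R = "\<lambda>k. -(1/be) * ((LINT z|lebesgue_on Om. g z * ((\<phi> (W z) * chi l (P z)) * eta (real (Suc k)) (P z)))
    + al * (LINT z|lebesgue_on Om. \<theta> z * ((deriv \<phi> (W z) * chi l (P z)) * eta (real (Suc k)) (P z)))
    + be * (LINT z|lebesgue_on Om. \<theta> z * ((\<phi> (W z) * chid l (P z)) * eta (real (Suc k)) (P z))))"
  have "?R \<longlonglongrightarrow> Vlim \<theta> g \<phi>"
    unfolding Vlim_def
    by (intro tendsto_mult tendsto_add tendsto_const dct_eta[OF g c1] dct_eta[OF th c2] dct_eta[OF th c3])
  moreover have "eventually (\<lambda>k. ?R k = seqT \<theta> \<phi> (real (Suc k))) sequentially"
  proof (rule eventually_mono[OF eventually_Suc_ge[of "3/l"]])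
    fix k assume "3/l \<le> real (Suc k)"
    then show "?R k = seqT \<theta> \<phi> (real (Suc k))"
      using seq_identity[OF th g td t, of "real (Suc k)"] by simp
  qed
  ultimately show ?thesis using tendsto_cong by (rule_tac tendsto_cong[THEN iffD1]) auto
qed

definition "Mc = (SOME M. \<forall>t. \<bar>chid l t\<bar> \<le> M)"

lemma Mc: "\<bar>chid l t\<bar> \<le> Mc"
  using someI_ex[OF chid_bound[OF lp]] unfolding Mc_def by blast

lemma Mc_nonneg: "Mc \<ge> 0" using Mc[of 0] by linarith

definition "C0 = (1 + \<bar>al\<bar> + \<bar>be\<bar> * Mc) * sqrt l / \<bar>be\<bar>"

lemma L2norm_nonneg: "L2norm S f \<ge> 0"
  unfolding L2norm_def by (rule real_sqrt_ge_zero, rule integral_nonneg_AE) simp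

lemma H1norm_nonneg: "H1norm a b f \<ge> 0"
  unfolding H1norm_def
  by (rule real_sqrt_ge_zero, intro add_nonneg_nonneg integral_nonneg_AE) simp_all

lemma piece_bound:
  assumes f: "f \<in> L2_on Om" and \<phi>: "continuous_on UNIV \<phi>" and c: "continuous_on UNIV c"
    and M: "\<And>z. \<bar>c z\<bar> \<le> M" and H: "sqrt (LINT y|lebesgue_on {0<..<l'}. (\<phi> y)\<^sup>2) \<le> H"
  shows "\<bar>LINT z|lebesgue_on Om. f z * (\<phi> (W z) * c z)\<bar> \<le> L2norm Om f * (M * (sqrt l * H))"
proof -
  have M0: "0 \<le> M" using M[of 0] by linarith
  have cc: "continuous_on UNIV (\<lambda>z. \<phi> (W z) * c z)" by (intro continuous_on_mult cW \<phi> c)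
  have "\<bar>LINT z|lebesgue_on Om. f z * (\<phi> (W z) * c z)\<bar> \<le> L2norm Om f * sqrt (LINT z|lebesgue_on Om. (\<phi> (W z) * c z)\<^sup>2)"
    by (rule L2_prod_bound[OF f cc])
  also have "\<dots> \<le> L2norm Om f * (M * sqrt (l * (LINT y|lebesgue_on {0<..<l'}. (\<phi> y)\<^sup>2)))"
    by (rule mult_left_mono[OF J_bound[OF \<phi> c M] L2norm_nonneg])
  also have "\<dots> \<le> L2norm Om f * (M * (sqrt l * H))"
  proof -
    have "sqrt (l * (LINT y|lebesgue_on {0<..<l'}. (\<phi> y)\<^sup>2)) \<le> sqrt l * H"
      using H lp by (simp add: real_sqrt_mult mult_left_mono)
    then show ?thesis by (intro mult_left_mono[OF mult_left_mono] L2norm_nonneg M0)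
  qed
  finally show ?thesis .
qed

lemma Vlim_bound:
  assumes th: "\<theta> \<in> L2_on Om" and g: "g \<in> L2_on Om" and t: "test_fun {0<..<l'} \<phi>"
  shows "\<bar>Vlim \<theta> g \<phi>\<bar> \<le> C0 * (L2norm Om \<theta> + L2norm Om g) * H1norm 0 l' \<phi>"
proof -
  note tp = test_props[OF t]
  let ?H = "H1norm 0 l' \<phi>"
  let ?h = "sqrt l * ?H"
  let ?a = "L2norm Om g" and ?b = "L2norm Om \<theta>"
  have h0: "?h \<ge> 0" using H1norm_nonneg lp by simp
  have a0: "?a \<ge> 0" and b0: "?b \<ge> 0" by (rule L2norm_nonneg)+
  let ?A = "LINT z|lebesgue_on Om. g z * (\<phi> (W z) * chi l (P z))"
  let ?B = "LINT z|lebesgue_on Om. \<theta> z * (deriv \<phi> (W z) * chi l (P z))"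
  let ?C = "LINT z|lebesgue_on Om. \<theta> z * (\<phi> (W z) * chid l (P z))"
  have cchi: "continuous_on UNIV (\<lambda>z. chi l (P z))" by (rule cP[OF chi_cont])
  have cchid: "continuous_on UNIV (\<lambda>z. chid l (P z))" by (rule cP[OF chid_cont])
  have chib: "\<bar>chi l (P z)\<bar> \<le> 1" for z using chi_nonneg chi_le1 by (simp add: abs_le_iff)
  have A: "\<bar>?A\<bar> \<le> ?a * (1 * ?h)"
    by (rule piece_bound[OF g tp(2) cchi chib H1_bounds(1)])
  have B: "\<bar>?B\<bar> \<le> ?b * (1 * ?h)"
    by (rule piece_bound[OF th tp(3) cchi chib H1_bounds(2)])
  have C: "\<bar>?C\<bar> \<le> ?b * (Mc * ?h)"
    by (rule piece_bound[OF th tp(2) cchid Mc H1_bounds(1)])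
  have "\<bar>?A + al * ?B + be * ?C\<bar> \<le> \<bar>?A + al * ?B\<bar> + \<bar>be * ?C\<bar>" by (rule abs_triangle_ineq)
  also have "\<dots> \<le> \<bar>?A\<bar> + \<bar>al * ?B\<bar> + \<bar>be * ?C\<bar>" using abs_triangle_ineq[of ?A "al * ?B"] by linarith
  also have "\<dots> = \<bar>?A\<bar> + \<bar>al\<bar> * \<bar>?B\<bar> + \<bar>be\<bar> * \<bar>?C\<bar>" by (simp add: abs_mult)
  also have "\<dots> \<le> ?a * ?h + \<bar>al\<bar> * (?b * ?h) + \<bar>be\<bar> * (?b * (Mc * ?h))"
    using A B C by (intro add_mono mult_left_mono) auto
  also have "\<dots> \<le> (1 + \<bar>al\<bar> + \<bar>be\<bar> * Mc) * (?b + ?a) * ?h"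
  proof -
    have "?a * ?h + \<bar>al\<bar> * (?b * ?h) + \<bar>be\<bar> * (?b * (Mc * ?h))
        = (?a + (\<bar>al\<bar> + \<bar>be\<bar> * Mc) * ?b) * ?h" by (simp add: algebra_simps)
    also have "\<dots> \<le> (1 + \<bar>al\<bar> + \<bar>be\<bar> * Mc) * (?b + ?a) * ?h"
    proof (rule mult_right_mono[OF _ h0])
      have "0 \<le> \<bar>al\<bar> + \<bar>be\<bar> * Mc" using Mc_nonneg by simp
      then have "0 \<le> (\<bar>al\<bar> + \<bar>be\<bar> * Mc) * ?a" using a0 by simp
      moreover have "0 \<le> ?b" by (rule b0)
      ultimately show "?a + (\<bar>al\<bar> + \<bar>be\<bar> * Mc) * ?b \<le> (1 + \<bar>al\<bar> + \<bar>be\<bar> * Mc) * (?b + ?a)"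
        by (simp add: algebra_simps)
    qed
    finally show ?thesis .
  qed
  finally have main: "\<bar>?A + al * ?B + be * ?C\<bar> \<le> (1 + \<bar>al\<bar> + \<bar>be\<bar> * Mc) * (?b + ?a) * ?h" .
  have "\<bar>Vlim \<theta> g \<phi>\<bar> = \<bar>?A + al * ?B + be * ?C\<bar> / \<bar>be\<bar>"
    unfolding Vlim_def by (simp add: abs_mult abs_minus_cancel divide_inverse mult.commute)
  also have "\<dots> \<le> (1 + \<bar>al\<bar> + \<bar>be\<bar> * Mc) * (?b + ?a) * ?h / \<bar>be\<bar>"
    by (rule divide_right_mono[OF main]) simp
  also have "\<dots> = C0 * (?b + ?a) * ?H" by (simp add: C0_def)
  finally show ?thesis .
qed

end


context trace_cfg begin

lemma KI:
  assumes n: "n > 0" "n \<ge> 3/l"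
  shows "(LINT x|lebesgue_on {0<..<l}. Kn n (sg * x + dd)) = 1"
proof -
  have c: "continuous_on UNIV (\<lambda>x. Kn n (sg * x + dd))"
    by (rule continuous_on_compose2[OF Kn_cont]) (auto intro!: continuous_intros)
  have d: "((\<lambda>x. sg * eta n (sg * x + dd)) has_vector_derivative Kn n (sg * x + dd)) (at x within {0..l})" for x
  proof -
    have d0: "((\<lambda>x. sg * x + dd) has_real_derivative sg) (at x)"
      using DERIV_add[OF DERIV_cmult[OF DERIV_ident, of sg] DERIV_const[of dd]] by simp
    have "((\<lambda>x. eta n (sg * x + dd)) has_real_derivative Kn n (sg * x + dd) * sg) (at x)"
      by (rule DERIV_chain2[OF eta_deriv d0])
    then have "((\<lambda>x. sg * eta n (sg * x + dd)) has_real_derivative sg * (Kn n (sg * x + dd) * sg)) (at x)"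
      by (rule DERIV_cmult)
    moreover have "sg * (Kn n (sg * x + dd) * sg) = Kn n (sg * x + dd)" using sg by auto
    ultimately show ?thesis
      by (simp add: has_real_derivative_iff_has_vector_derivative has_vector_derivative_at_within)
  qed
  have "((\<lambda>x. Kn n (sg * x + dd)) has_integral (sg * eta n (sg * l + dd) - sg * eta n (sg * 0 + dd))) {0..l}"
    by (rule fundamental_theorem_of_calculus) (use lp d in auto)
  moreover have "sg * eta n (sg * l + dd) - sg * eta n (sg * 0 + dd) = 1"
  proof -
    have two: "2/n \<le> l" using n lp by (simp add: field_simps)
    have e1: "eta n l = 1" by (rule eta_one[OF n(1) two])
    have e0: "eta n 0 = 0" by (rule eta_zero[OF n(1)]) (use n in simp)
    show ?thesis using sg e1 e0 by (auto simp: dd_def)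
  qed
  ultimately have "integral {0..l} (\<lambda>x. Kn n (sg * x + dd)) = 1" by (simp add: integral_unique)
  then show ?thesis using lint_ioo_hk[OF c] by simp
qed

lemma sep_int:
  assumes G: "continuous_on UNIV G" and n: "n > 0" "n \<ge> 3/l"
  shows "(LINT z|lebesgue_on Om. G (W z) * Kn n (P z)) = (LINT s|lebesgue_on {0<..<l'}. G s)"
proof -
  have c: "continuous_on UNIV (\<lambda>x. Kn n (sg * x + dd))"
    by (rule continuous_on_compose2[OF Kn_cont]) (auto intro!: continuous_intros)
  have "(LINT z|lebesgue_on Om. G (W z) * Kn n (P z)) = (LINT z|lebesgue_on Om. (\<lambda>x. Kn n (sg * x + dd)) (u z) * G (W z))"
    by (simp add: P_def mult.commute)
  also have "\<dots> = (LINT x|lebesgue_on {0<..<l}. Kn n (sg * x + dd)) * (LINT s|lebesgue_on {0<..<l'}. G s)"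
    using fub[OF c G] unfolding Om_def .
  also have "\<dots> = (LINT s|lebesgue_on {0<..<l'}. G s)" using KI[OF n] by simp
  finally show ?thesis .
qed

lemma B_mem_K:
  "\<exists>K. compact K \<and> Om \<subseteq> K \<and> (\<forall>z\<in>Om. B (W z) \<in> K)"
proof -
  have c1: "compact (closure Om)" using Om_bounded by (simp add: compact_closure)
  have c2: "compact (B ` {0..l'})"
    by (rule compact_continuous_image[OF continuous_on_subset[OF Bc] compact_Icc]) simp
  have "Om \<subseteq> closure Om \<union> B ` {0..l'}" using closure_subset by blast
  moreover have "B (W z) \<in> closure Om \<union> B ` {0..l'}" if "z \<in> Om" for z
    using that memOm[of z] by auto
  ultimately show ?thesis using compact_Un[OF c1 c2] by blast
qed

lemma conv_C1:
  assumes c: "continuous_on UNIV \<theta>" and t: "test_fun {0<..<l'} \<phi>"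
  shows "(\<lambda>k. seqT \<theta> \<phi> (real (Suc k))) \<longlonglongrightarrow> (LINT s|lebesgue_on {0<..<l'}. \<theta> (B s) * \<phi> s)"
proof (rule LIMSEQ_I)
  fix e :: real assume e: "e > 0"
  note tp = test_props[OF t]
  obtain K where K: "compact K" "Om \<subseteq> K" "\<And>z. z \<in> Om \<Longrightarrow> B (W z) \<in> K" using B_mem_K by blast
  have uc: "uniformly_continuous_on K \<theta>"
    by (rule compact_uniformly_continuous[OF continuous_on_subset[OF c] K(1)]) simp
  define Iphi where "Iphi = (LINT s|lebesgue_on {0<..<l'}. \<bar>\<phi> s\<bar>)"
  have I0: "Iphi \<ge> 0" unfolding Iphi_def by (rule integral_nonneg_AE) simp
  define ep where "ep = e / (2 * (Iphi + 1))"
  have ep: "ep > 0" using e I0 by (simp add: ep_def)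
  obtain d where d: "d > 0" and dd': "\<And>x x'. x \<in> K \<Longrightarrow> x' \<in> K \<Longrightarrow> dist x' x < d \<Longrightarrow> dist (\<theta> x') (\<theta> x) < ep"
    using uc ep unfolding uniformly_continuous_on_def by metis
  obtain N :: nat where N: "max (3/l) (3/d) \<le> real N" using real_arch_simple by blast
  have "norm (seqT \<theta> \<phi> (real (Suc k)) - (LINT s|lebesgue_on {0<..<l'}. \<theta> (B s) * \<phi> s)) < e"
    if k: "k \<ge> N" for k
  proof -
    define n where "n = real (Suc k)"
    have n0: "n > 0" by (simp add: n_def)
    have nl: "n \<ge> 3/l" and nd: "n \<ge> 3/d" using N k by (auto simp: n_def)
    have twod: "2/n < d"
    proof -
      have "3/n \<le> d" using nd d n0 by (simp add: field_simps)
      moreover have "2/n < 3/n" using n0 by (simp add: divide_strict_right_mono)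
      ultimately show ?thesis by linarith
    qed
    have cG: "continuous_on UNIV (\<lambda>s. \<theta> (B s) * \<phi> s)"
      by (intro continuous_on_mult tp(2) continuous_on_compose2[OF c Bc]) auto
    have cPhi: "continuous_on UNIV (\<lambda>s. \<bar>\<phi> s\<bar>)" by (intro continuous_intros tp(2))
    have i1: "integrable (lebesgue_on Om) (\<lambda>z. \<theta> z * (\<phi> (W z) * Kn n (P z)))"
      by (rule cont_int_Om) (intro continuous_on_mult c cW cP tp(2) Kn_cont)
    have i2: "integrable (lebesgue_on Om) (\<lambda>z. (\<theta> (B (W z)) * \<phi> (W z)) * Kn n (P z))"
      by (rule cont_int_Om) (intro continuous_on_mult cW cP cG Kn_cont)
    have i3: "integrable (lebesgue_on Om) (\<lambda>z. ep * (\<bar>\<phi> (W z)\<bar> * Kn n (P z)))"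
      by (rule cont_int_Om) (intro continuous_on_mult continuous_on_const cW cP cPhi Kn_cont)
    have s1: "(LINT z|lebesgue_on Om. (\<theta> (B (W z)) * \<phi> (W z)) * Kn n (P z)) = (LINT s|lebesgue_on {0<..<l'}. \<theta> (B s) * \<phi> s)"
      by (rule sep_int[OF cG n0 nl])
    have s2: "(LINT z|lebesgue_on Om. \<bar>\<phi> (W z)\<bar> * Kn n (P z)) = Iphi"
      unfolding Iphi_def by (rule sep_int[OF cPhi n0 nl])
    have "seqT \<theta> \<phi> n - (LINT s|lebesgue_on {0<..<l'}. \<theta> (B s) * \<phi> s)
       = (LINT z|lebesgue_on Om. \<theta> z * (\<phi> (W z) * Kn n (P z)) - (\<theta> (B (W z)) * \<phi> (W z)) * Kn n (P z))"
      unfolding seqT_def s1[symmetric] by (rule Bochner_Integration.integral_diff[OF i1 i2, symmetric])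
    then have "\<bar>seqT \<theta> \<phi> n - (LINT s|lebesgue_on {0<..<l'}. \<theta> (B s) * \<phi> s)\<bar>
       \<le> (LINT z|lebesgue_on Om. \<bar>\<theta> z * (\<phi> (W z) * Kn n (P z)) - (\<theta> (B (W z)) * \<phi> (W z)) * Kn n (P z)\<bar>)"
      using integral_abs_bound by simp
    also have "\<dots> \<le> (LINT z|lebesgue_on Om. ep * (\<bar>\<phi> (W z)\<bar> * Kn n (P z)))"
    proof (rule integral_mono_AE)
      show "integrable (lebesgue_on Om) (\<lambda>z. \<bar>\<theta> z * (\<phi> (W z) * Kn n (P z)) - \<theta> (B (W z)) * \<phi> (W z) * Kn n (P z)\<bar>)"
        using i1 i2 by simp
      show "integrable (lebesgue_on Om) (\<lambda>z. ep * (\<bar>\<phi> (W z)\<bar> * Kn n (P z)))" by (rule i3)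
      show "AE z in lebesgue_on Om. \<bar>\<theta> z * (\<phi> (W z) * Kn n (P z)) - \<theta> (B (W z)) * \<phi> (W z) * Kn n (P z)\<bar>
              \<le> ep * (\<bar>\<phi> (W z)\<bar> * Kn n (P z))"
      proof (rule AE_I2)
        fix z assume "z \<in> space (lebesgue_on Om)"
        then have z: "z \<in> Om" by (simp add: space_Om)
        have kn0: "Kn n (P z) \<ge> 0" using Kn_nonneg n0 by simp
        have eq: "\<theta> z * (\<phi> (W z) * Kn n (P z)) - \<theta> (B (W z)) * \<phi> (W z) * Kn n (P z)
             = (\<theta> z - \<theta> (B (W z))) * (\<phi> (W z) * Kn n (P z))" by (simp add: algebra_simps)
        show "\<bar>\<theta> z * (\<phi> (W z) * Kn n (P z)) - \<theta> (B (W z)) * \<phi> (W z) * Kn n (P z)\<bar>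
              \<le> ep * (\<bar>\<phi> (W z)\<bar> * Kn n (P z))"
        proof (cases "Kn n (P z) = 0")
          case True then show ?thesis by simp
        next
          case False
          then have "P z \<le> 2/n" using Kn_zero[OF n0, of "P z"] by linarith
          moreover have "P z > 0" using P_pos[OF z] .
          ultimately have "dist z (B (W z)) < d" using Bd[of z] twod by (simp add: P_def dd_def)
          then have "dist (\<theta> z) (\<theta> (B (W z))) < ep"
            using dd'[of "B (W z)" z] K(2) K(3)[OF z] z by (auto simp: dist_commute)
          then have a: "\<bar>\<theta> z - \<theta> (B (W z))\<bar> \<le> ep" by (simp add: dist_real_def)
          have "\<bar>(\<theta> z - \<theta> (B (W z))) * (\<phi> (W z) * Kn n (P z))\<bar>
              = \<bar>\<theta> z - \<theta> (B (W z))\<bar> * (\<bar>\<phi> (W z)\<bar> * Kn n (P z))" using kn0 by (simp add: abs_mult)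
          also have "\<dots> \<le> ep * (\<bar>\<phi> (W z)\<bar> * Kn n (P z))"
            by (rule mult_right_mono[OF a]) (use kn0 in simp)
          finally show ?thesis unfolding eq .
        qed
      qed
    qed
    also have "\<dots> = ep * Iphi" using s2 by simp
    also have "\<dots> < e"
    proof -
      have "ep * Iphi = e * (Iphi / (2 * (Iphi + 1)))" by (simp add: ep_def)
      also have "\<dots> < e * 1"
      proof (rule mult_strict_left_mono[OF _ e])
        show "Iphi / (2 * (Iphi + 1)) < 1" using I0 by (simp add: field_simps)
      qed
      finally show ?thesis by simp
    qed
    finally show ?thesis by (simp add: n_def)
  qed
  then show "\<exists>no. \<forall>k\<ge>no. norm (seqT \<theta> \<phi> (real (Suc k)) - (LINT s|lebesgue_on {0<..<l'}. \<theta> (B s) * \<phi> s)) < e"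
    by blast
qed

end


context trace_cfg begin

definition "Tr \<theta> \<phi> = lim (\<lambda>k. seqT \<theta> \<phi> (real (Suc k)))"

lemma seq_int:
  assumes th: "\<theta> \<in> L2_on Om" and t: "test_fun {0<..<l'} \<phi>"
  shows "integrable (lebesgue_on Om) (\<lambda>z. \<theta> z * (\<phi> (W z) * Kn n (P z)))"
  using test_props[OF t] by (intro L2_prod_int[OF th] continuous_on_mult cW cP Kn_cont) auto

lemma seq_lin_phi:
  assumes th: "\<theta> \<in> L2_on Om" and t1: "test_fun {0<..<l'} \<phi>" and t2: "test_fun {0<..<l'} \<psi>"
  shows "seqT \<theta> (\<lambda>t. a * \<phi> t + b * \<psi> t) n = a * seqT \<theta> \<phi> n + b * seqT \<theta> \<psi> n"
proof -
  have "seqT \<theta> (\<lambda>t. a * \<phi> t + b * \<psi> t) n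
     = (LINT z|lebesgue_on Om. a * (\<theta> z * (\<phi> (W z) * Kn n (P z))) + b * (\<theta> z * (\<psi> (W z) * Kn n (P z))))"
    unfolding seqT_def by (rule Bochner_Integration.integral_cong) (simp_all add: algebra_simps)
  also have "\<dots> = a * seqT \<theta> \<phi> n + b * seqT \<theta> \<psi> n"
    using seq_int[OF th t1] seq_int[OF th t2] by (simp add: seqT_def)
  finally show ?thesis .
qed

lemma seq_lin_theta:
  assumes th: "\<theta> \<in> L2_on Om" and et: "\<eta> \<in> L2_on Om" and t: "test_fun {0<..<l'} \<phi>"
  shows "seqT (\<lambda>z. a * \<theta> z + b * \<eta> z) \<phi> n = a * seqT \<theta> \<phi> n + b * seqT \<eta> \<phi> n"
proof -
  have "seqT (\<lambda>z. a * \<theta> z + b * \<eta> z) \<phi> n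
     = (LINT z|lebesgue_on Om. a * (\<theta> z * (\<phi> (W z) * Kn n (P z))) + b * (\<eta> z * (\<phi> (W z) * Kn n (P z))))"
    unfolding seqT_def by (rule Bochner_Integration.integral_cong) (simp_all add: algebra_simps)
  also have "\<dots> = a * seqT \<theta> \<phi> n + b * seqT \<eta> \<phi> n"
    using seq_int[OF th t] seq_int[OF et t] by (simp add: seqT_def)
  finally show ?thesis .
qed

lemma X1_D:
  assumes "\<theta> \<in> X1 lam Om"
  shows "\<theta> \<in> L2_on Om" "\<exists>g. g \<in> L2_on Om \<and> transport_deriv lam Om \<theta> g"
  using assms by (auto simp: X1_def)

lemma Tr_eq:
  assumes "\<theta> \<in> L2_on Om" "g \<in> L2_on Om" "transport_deriv lam Om \<theta> g" "test_fun {0<..<l'} \<phi>"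
  shows "Tr \<theta> \<phi> = Vlim \<theta> g \<phi>" "(\<lambda>k. seqT \<theta> \<phi> (real (Suc k))) \<longlonglongrightarrow> Tr \<theta> \<phi>"
  using conv_X1[OF assms] by (auto simp: Tr_def limI)

lemma Tr_conv:
  assumes "\<theta> \<in> X1 lam Om" "test_fun {0<..<l'} \<phi>"
  shows "(\<lambda>k. seqT \<theta> \<phi> (real (Suc k))) \<longlonglongrightarrow> Tr \<theta> \<phi>"
  using X1_D[OF assms(1)] Tr_eq(2) assms(2) by blast

lemma C0_nonneg: "C0 \<ge> 0"
  using Mc_nonneg lp by (simp add: C0_def)

lemma X1norm_ge:
  assumes "\<theta> \<in> X1 lam Om"
  shows "L2norm Om \<theta> \<le> X1norm lam Om \<theta>"
    "L2norm Om (SOME g. g \<in> L2_on Om \<and> transport_deriv lam Om \<theta> g) \<le> X1norm lam Om \<theta>"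
proof -
  have "a \<le> sqrt (a\<^sup>2 + b\<^sup>2)" "b \<le> sqrt (a\<^sup>2 + b\<^sup>2)" for a b :: real
  proof -
    have "a \<le> \<bar>a\<bar>" by simp
    also have "\<bar>a\<bar> = sqrt (a\<^sup>2)" by simp
    also have "\<dots> \<le> sqrt (a\<^sup>2 + b\<^sup>2)" by (rule real_sqrt_le_mono) simp
    finally show "a \<le> sqrt (a\<^sup>2 + b\<^sup>2)" .
    have "b \<le> \<bar>b\<bar>" by simp
    also have "\<bar>b\<bar> = sqrt (b\<^sup>2)" by simp
    also have "\<dots> \<le> sqrt (a\<^sup>2 + b\<^sup>2)" by (rule real_sqrt_le_mono) simp
    finally show "b \<le> sqrt (a\<^sup>2 + b\<^sup>2)" .
  qed
  then show "L2norm Om \<theta> \<le> X1norm lam Om \<theta>"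
    "L2norm Om (SOME g. g \<in> L2_on Om \<and> transport_deriv lam Om \<theta> g) \<le> X1norm lam Om \<theta>"
    unfolding X1norm_def by blast+
qed

theorem trace_exists: "\<exists>T. is_trace_op lam Om 0 l' (\<lambda>\<theta> s. \<theta> (B s)) T"
proof (rule exI[of _ Tr], unfold is_trace_op_def, intro conjI ballI allI impI)
  fix \<theta> assume X: "\<theta> \<in> X1 lam Om"
  obtain g where g: "g \<in> L2_on Om" "transport_deriv lam Om \<theta> g" using X1_D(2)[OF X] by blast
  have th: "\<theta> \<in> L2_on Om" by (rule X1_D(1)[OF X])
  show "in_Hm1 0 l' (Tr \<theta>)"
    unfolding in_Hm1_def
  proof (intro conjI allI impI)
    fix \<phi> \<psi> a b assume t1: "test_fun {0<..<l'} \<phi>" and t2: "test_fun {0<..<l'} \<psi>"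
    have "(\<lambda>k. seqT \<theta> (\<lambda>t. a * \<phi> t + b * \<psi> t) (real (Suc k))) \<longlonglongrightarrow> a * Tr \<theta> \<phi> + b * Tr \<theta> \<psi>"
      unfolding seq_lin_phi[OF th t1 t2]
      by (intro tendsto_add tendsto_mult tendsto_const Tr_conv[OF X t1] Tr_conv[OF X t2])
    then show "Tr \<theta> (\<lambda>t. a * \<phi> t + b * \<psi> t) = a * Tr \<theta> \<phi> + b * Tr \<theta> \<psi>"
      by (simp add: Tr_def limI)
  next
    show "\<exists>C. \<forall>\<phi>. test_fun {0<..<l'} \<phi> \<longrightarrow> \<bar>Tr \<theta> \<phi>\<bar> \<le> C * H1norm 0 l' \<phi>"
    proof (intro exI allI impI)
      fix \<phi> assume t': "test_fun {0<..<l'} \<phi>"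
      show "\<bar>Tr \<theta> \<phi>\<bar> \<le> C0 * (L2norm Om \<theta> + L2norm Om g) * H1norm 0 l' \<phi>"
        using Tr_eq(1)[OF th g t'] Vlim_bound[OF th g(1) t'] by simp
    qed
  qed
next
  fix \<theta> \<eta> \<alpha> \<beta> \<phi> assume X: "\<theta> \<in> X1 lam Om" and Y: "\<eta> \<in> X1 lam Om" and t: "test_fun {0<..<l'} \<phi>"
  have "(\<lambda>k. seqT (\<lambda>z. \<alpha> * \<theta> z + \<beta> * \<eta> z) \<phi> (real (Suc k))) \<longlonglongrightarrow> \<alpha> * Tr \<theta> \<phi> + \<beta> * Tr \<eta> \<phi>"
    unfolding seq_lin_theta[OF X1_D(1)[OF X] X1_D(1)[OF Y] t]
    by (intro tendsto_add tendsto_mult tendsto_const Tr_conv[OF X t] Tr_conv[OF Y t])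
  then show "Tr (\<lambda>z. \<alpha> * \<theta> z + \<beta> * \<eta> z) \<phi> = \<alpha> * Tr \<theta> \<phi> + \<beta> * Tr \<eta> \<phi>"
    by (simp add: Tr_def limI)
next
  show "\<exists>C. \<forall>\<theta>\<in>X1 lam Om. \<forall>\<phi>. test_fun {0<..<l'} \<phi> \<longrightarrow>
        \<bar>Tr \<theta> \<phi>\<bar> \<le> C * X1norm lam Om \<theta> * H1norm 0 l' \<phi>"
  proof (intro exI[of _ "2 * C0"] ballI allI impI)
    fix \<theta> \<phi> assume X: "\<theta> \<in> X1 lam Om" and t: "test_fun {0<..<l'} \<phi>"
    define g where "g = (SOME g. g \<in> L2_on Om \<and> transport_deriv lam Om \<theta> g)"
    have g: "g \<in> L2_on Om" "transport_deriv lam Om \<theta> g"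
      using someI_ex[OF X1_D(2)[OF X]] unfolding g_def by blast+
    have th: "\<theta> \<in> L2_on Om" by (rule X1_D(1)[OF X])
    have "\<bar>Tr \<theta> \<phi>\<bar> \<le> C0 * (L2norm Om \<theta> + L2norm Om g) * H1norm 0 l' \<phi>"
      using Tr_eq(1)[OF th g t] Vlim_bound[OF th g(1) t] by simp
    also have "\<dots> \<le> C0 * (X1norm lam Om \<theta> + X1norm lam Om \<theta>) * H1norm 0 l' \<phi>"
      using X1norm_ge[OF X] C0_nonneg H1norm_nonneg unfolding g_def[symmetric]
      by (intro mult_right_mono mult_left_mono add_mono) auto
    also have "\<dots> = 2 * C0 * X1norm lam Om \<theta> * H1norm 0 l' \<phi>" by simp
    finally show "\<bar>Tr \<theta> \<phi>\<bar> \<le> 2 * C0 * X1norm lam Om \<theta> * H1norm 0 l' \<phi>" .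
  qed
next
  fix \<theta> :: "real \<times> real \<Rightarrow> real" and \<phi> :: "real \<Rightarrow> real" assume c: "Ck 1 \<theta>" and t: "test_fun {0<..<l'} \<phi>"
  have "continuous_on UNIV \<theta>" using c by (simp add: Ck_cont)
  from conv_C1[OF this t] show "Tr \<theta> \<phi> = (LINT t|lebesgue_on {0<..<l'}. \<theta> (B t) * \<phi> t)"
    by (simp add: Tr_def limI)
qed

end


lemma norm_pair_le: "norm (z::real \<times> real) \<le> \<bar>fst z\<bar> + \<bar>snd z\<bar>"
proof -
  have "norm z = sqrt ((fst z)\<^sup>2 + (snd z)\<^sup>2)" by (simp add: norm_prod_def)
  also have "\<dots> \<le> sqrt ((fst z)\<^sup>2) + sqrt ((snd z)\<^sup>2)" by (rule sqrt_add_le_add_sqrt) simp_all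
  also have "\<dots> = \<bar>fst z\<bar> + \<bar>snd z\<bar>" by simp
  finally show ?thesis .
qed

lemma dist_pair1: "dist (z::real \<times> real) (c, snd z) = \<bar>fst z - c\<bar>"
  by (simp add: dist_prod_def dist_real_def)
lemma dist_pair2: "dist (z::real \<times> real) (fst z, c) = \<bar>snd z - c\<bar>"
  by (simp add: dist_prod_def dist_real_def)

lemma fub_swap:
  fixes F G :: "real \<Rightarrow> real"
  assumes "continuous_on UNIV F" "continuous_on UNIV G"
  shows "(LINT z|lebesgue_on ({0<..<L1} \<times> {0<..<L2}). F (snd z) * G (fst z))
       = (LINT x|lebesgue_on {0<..<L2}. F x) * (LINT y|lebesgue_on {0<..<L1}. G y)"
  using rect_fubini[OF assms(2,1), of 0 L1 0 L2] by (simp add: mult.commute)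

lemma trace_x0:
  assumes "L1 > 0" "L2 > 0" "lam \<noteq> 0"
  shows "\<exists>T. is_trace_op lam ({0<..<L1} \<times> {0<..<L2}) 0 L2 (\<lambda>\<theta> y. \<theta> (0, y)) T"
proof -
  interpret trace_cfg L1 L2 lam snd fst "1" L1 L2 "\<lambda>y. (0, y)"
  proof (rule trace_cfg.intro)
    show "bounded_linear (snd :: real \<times> real \<Rightarrow> real)" by (rule bounded_linear_snd)
    show "bounded_linear (fst :: real \<times> real \<Rightarrow> real)" by (rule bounded_linear_fst)
    show "\<And>(F::real\<Rightarrow>real) (G::real\<Rightarrow>real). continuous_on UNIV F \<Longrightarrow> continuous_on UNIV G \<Longrightarrow>
     (LINT z|lebesgue_on ({0<..<L1} \<times> {0<..<L2}). F (fst z) * G (snd z))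
       = (LINT x|lebesgue_on {0<..<L1}. F x) * (LINT y|lebesgue_on {0<..<L2}. G y)"
      by (rule rect_fubini)
    show "\<And>z. dist z (0, snd z) = \<bar>1 * fst z + (if (1::real) = 1 then 0 else L1)\<bar>"
      by (simp add: dist_prod_def dist_real_def abs_minus_commute)
    show "\<And>z. norm z \<le> \<bar>fst z\<bar> + \<bar>snd z\<bar>" using norm_pair_le by (simp add: add.commute)
  qed (use assms in \<open>auto intro: continuous_intros\<close>)
  show ?thesis using trace_exists by (simp add: Om_def)
qed

lemma trace_xL:
  assumes "L1 > 0" "L2 > 0" "lam \<noteq> 0"
  shows "\<exists>T. is_trace_op lam ({0<..<L1} \<times> {0<..<L2}) 0 L2 (\<lambda>\<theta> y. \<theta> (L1, y)) T"
proof -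
  interpret trace_cfg L1 L2 lam snd fst "-1" L1 L2 "\<lambda>y. (L1, y)"
  proof (rule trace_cfg.intro)
    show "bounded_linear (snd :: real \<times> real \<Rightarrow> real)" by (rule bounded_linear_snd)
    show "bounded_linear (fst :: real \<times> real \<Rightarrow> real)" by (rule bounded_linear_fst)
    show "\<And>(F::real\<Rightarrow>real) (G::real\<Rightarrow>real). continuous_on UNIV F \<Longrightarrow> continuous_on UNIV G \<Longrightarrow>
     (LINT z|lebesgue_on ({0<..<L1} \<times> {0<..<L2}). F (fst z) * G (snd z))
       = (LINT x|lebesgue_on {0<..<L1}. F x) * (LINT y|lebesgue_on {0<..<L2}. G y)"
      by (rule rect_fubini)
    show "\<And>z. dist z (L1, snd z) = \<bar>-1 * fst z + (if (-1::real) = 1 then 0 else L1)\<bar>"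
      by (simp add: dist_prod_def dist_real_def abs_minus_commute)
    show "\<And>z. norm z \<le> \<bar>fst z\<bar> + \<bar>snd z\<bar>" using norm_pair_le by (simp add: add.commute)
  qed (use assms in \<open>auto intro: continuous_intros\<close>)
  show ?thesis using trace_exists by (simp add: Om_def)
qed

lemma trace_y0:
  assumes "L1 > 0" "L2 > 0" "lam \<noteq> 0"
  shows "\<exists>T. is_trace_op lam ({0<..<L1} \<times> {0<..<L2}) 0 L1 (\<lambda>\<theta> x. \<theta> (x, 0)) T"
proof -
  interpret trace_cfg L1 L2 lam fst snd "1" L2 L1 "\<lambda>x. (x, 0)"
  proof (rule trace_cfg.intro)
    show "bounded_linear (snd :: real \<times> real \<Rightarrow> real)" by (rule bounded_linear_snd)
    show "bounded_linear (fst :: real \<times> real \<Rightarrow> real)" by (rule bounded_linear_fst)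
    show "\<And>(F::real\<Rightarrow>real) (G::real\<Rightarrow>real). continuous_on UNIV F \<Longrightarrow> continuous_on UNIV G \<Longrightarrow>
     (LINT z|lebesgue_on ({0<..<L1} \<times> {0<..<L2}). F (snd z) * G (fst z))
       = (LINT x|lebesgue_on {0<..<L2}. F x) * (LINT y|lebesgue_on {0<..<L1}. G y)"
      by (rule fub_swap)
    show "\<And>z. dist z (fst z, 0) = \<bar>1 * snd z + (if (1::real) = 1 then 0 else L2)\<bar>"
      by (simp add: dist_prod_def dist_real_def abs_minus_commute)
    show "\<And>z. norm z \<le> \<bar>snd z\<bar> + \<bar>fst z\<bar>" using norm_pair_le by (simp add: add.commute)
  qed (use assms in \<open>auto intro: continuous_intros\<close>)
  show ?thesis using trace_exists by (simp add: Om_def)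
qed

lemma trace_yL:
  assumes "L1 > 0" "L2 > 0" "lam \<noteq> 0"
  shows "\<exists>T. is_trace_op lam ({0<..<L1} \<times> {0<..<L2}) 0 L1 (\<lambda>\<theta> x. \<theta> (x, L2)) T"
proof -
  interpret trace_cfg L1 L2 lam fst snd "-1" L2 L1 "\<lambda>x. (x, L2)"
  proof (rule trace_cfg.intro)
    show "bounded_linear (snd :: real \<times> real \<Rightarrow> real)" by (rule bounded_linear_snd)
    show "bounded_linear (fst :: real \<times> real \<Rightarrow> real)" by (rule bounded_linear_fst)
    show "\<And>(F::real\<Rightarrow>real) (G::real\<Rightarrow>real). continuous_on UNIV F \<Longrightarrow> continuous_on UNIV G \<Longrightarrow>
     (LINT z|lebesgue_on ({0<..<L1} \<times> {0<..<L2}). F (snd z) * G (fst z))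
       = (LINT x|lebesgue_on {0<..<L2}. F x) * (LINT y|lebesgue_on {0<..<L1}. G y)"
      by (rule fub_swap)
    show "\<And>z. dist z (fst z, L2) = \<bar>-1 * snd z + (if (-1::real) = 1 then 0 else L2)\<bar>"
      by (simp add: dist_prod_def dist_real_def abs_minus_commute)
    show "\<And>z. norm z \<le> \<bar>snd z\<bar> + \<bar>fst z\<bar>" using norm_pair_le by (simp add: add.commute)
  qed (use assms in \<open>auto intro: continuous_intros\<close>)
  show ?thesis using trace_exists by (simp add: Om_def)
qed

theorem proposition2p3:
  fixes L1 L2 lam :: real
  assumes "L1 > 0" and "L2 > 0" and "lam \<noteq> 0"
  defines "\<Omega> \<equiv> {0<..<L1} \<times> {0<..<L2}"
  shows "(\<exists>T. is_trace_op lam \<Omega> 0 L2 (\<lambda>\<theta> y. \<theta> (0, y)) T) \<and>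
         (\<exists>T. is_trace_op lam \<Omega> 0 L2 (\<lambda>\<theta> y. \<theta> (L1, y)) T) \<and>
         (\<exists>T. is_trace_op lam \<Omega> 0 L1 (\<lambda>\<theta> x. \<theta> (x, 0)) T) \<and>
         (\<exists>T. is_trace_op lam \<Omega> 0 L1 (\<lambda>\<theta> x. \<theta> (x, L2)) T)"
  unfolding \<Omega>_def using trace_x0[OF assms(1-3)] trace_xL[OF assms(1-3)] trace_y0[OF assms(1-3)] trace_yL[OF assms(1-3)]
  by blast


end
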